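(* Let $n\ge -1$ be an odd integer, and let $q_1,q_2\in\Gamma_n$ and paths $a,b$ of positive length satisfy $q_1a=bq_2$ (so $q_1$ and $q_2$ occur at different positions in the path $w:=q_1a=bq_2$, $q_1$ as a suffix and $q_2$ as a prefix). If $a\notin I$ and $b\notin I$, then there exist $(n+1)$-ambiguities $p_1,p_2\le w$ (occurring in $w$) such that $\sigma_n(p_1)=q_1$ and $\pi_n(p_2)=q_2$ (as occurrences in $w$).
   Context: Let $\Bbbk$ be a field, $Q=(Q_0,Q_1,s,t)$ a finite quiver, and $A=\Bbbk Q/I$ a finite-dimensional monomial algebra, i.e. $I$ is an ideal generated by paths of length at least $2$. Paths are written from right to left: a path is $p=\alpha_n\cdots\alpha_1$ with arrows $\alpha_i$ and $t(\alpha_i)=s(\alpha_{i+1})$; vertices are the paths of length $0$ (trivial paths, also denoted $1$); $qp$ denotes concatenation when $t(p)=s(q)$. Let $\mathcal B$ be the set of paths not lying in $I$. If $p=bqa$ for paths $a,b,q$, then $q$ is a divisor of $p$; we write $q\le p$ to mean that $q$ is a divisor of $p$ at a fixed position (an occurrence), and then $\mathrm{pre}_p(q):=a$, $\mathrm{suf}_p(q):=b$. If $b$ is trivial, $q$ is a suffix; if $a$ is trivial, $q$ is a prefix; proper means $q\neq p$, written $q\lneq p$. For $n\ge -1$, a left $n$-ambiguity is a path $p$ with a decomposition $p=u_{-1}u_0u_1\cdots u_n$ such that $u_{-1}\in Q_0$, $u_0\in Q_1$, $u_i\in\mathcal B$ for all $i$, and for every $0\le i\le n-1$, $u_iu_{i+1}\in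 I$ while no proper suffix of $u_iu_{i+1}$ lies in $I$ (one writes $p=u_0\cdots u_n$). A right $n$-ambiguity is a path with a decomposition $p=v_n\cdots v_0v_{-1}$ with $v_{-1}\in Q_0$, $v_0\in Q_1$, $v_i\in\mathcal B$, and for $0\le i\le n-1$, $v_{i+1}v_i\in I$ while no proper prefix of $v_{i+1}v_i$ lies in $I$. A path is a left $n$-ambiguity iff it is a right $n$-ambiguity; such paths are called $n$-ambiguities, and $\Gamma_n$ denotes their set. Both decompositions of an $n$-ambiguity are unique. For $p\in\Gamma_n$ with left decomposition $u_0\cdots u_n$ and right decomposition $v_n\cdots v_0$, and $-1\le m\le n$, set $\sigma_m(p):=u_0\cdots u_m$ (a suffix of $p$ which is an $m$-ambiguity) and $\pi_m(p):=v_m\cdots v_0$ (a prefix of $p$ which is an $m$-ambiguity). *)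

theory Defs
  imports Main
begin

(* A path is a pair (es, v):
   es = the list of arrows in WRITTEN order (right-to-left composition, so
   the path alpha_n ... alpha_1 is the list [alpha_n, ..., alpha_1]; the head
   is traversed last), and v = the source vertex s(p). *)

type_synonym ('v,'e) qpath = "'e list \<times> 'v"

definition triv :: "'v \<Rightarrow> ('v,'e) qpath" where
  "triv v = ([], v)"

definition psrc :: "('v,'e) qpath \<Rightarrow> 'v" where
  "psrc p = snd p"

definition plen :: "('v,'e) qpath \<Rightarrow> nat" where
  "plen p = length (fst p)"

(* concatenation  q p  (p first, then q); meaningful when ptgt p = psrc q *)
definition pcomp :: "('v,'e) qpath \<Rightarrow> ('v,'e) qpath \<Rightarrow> ('v,'e) qpath" where
  "pcomp q p = (fst q @ fst p, snd p)"

fun pcomp_list :: "('v,'e) qpath list \<Rightarrow> ('v,'e) qpath" where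
  "pcomp_list [] = undefined"
| "pcomp_list [x] = x"
| "pcomp_list (x # xs) = pcomp x (pcomp_list xs)"

locale quiver_monomial =
  fixes Q0 :: "'v set" and Q1 :: "'e set" and s :: "'e \<Rightarrow> 'v" and t :: "'e \<Rightarrow> 'v"
    and R :: "('v,'e) qpath set"   (* generating set of paths of the ideal I *)
begin

definition ptgt :: "('v,'e) qpath \<Rightarrow> 'v" where
  "ptgt p = (if fst p = [] then snd p else t (hd (fst p)))"

definition is_path :: "('v,'e) qpath \<Rightarrow> bool" where
  "is_path p \<longleftrightarrow> snd p \<in> Q0 \<and> set (fst p) \<subseteq> Q1
     \<and> (\<forall>i. Suc i < length (fst p) \<longrightarrow> s (fst p ! i) = t (fst p ! Suc i))
     \<and> (fst p \<noteq> [] \<longrightarrow> s (last (fst p)) = snd p)"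

(* q occurs in w at the position w = x q y  (x = suf_w(q), y = pre_w(q)) *)
definition occ :: "('v,'e) qpath \<Rightarrow> ('v,'e) qpath \<Rightarrow> ('v,'e) qpath \<Rightarrow> ('v,'e) qpath \<Rightarrow> bool" where
  "occ w q x y \<longleftrightarrow> is_path x \<and> is_path q \<and> is_path y \<and> ptgt y = psrc q \<and> ptgt q = psrc x
     \<and> w = pcomp x (pcomp q y)"

(* a path lies in the monomial ideal I generated by the paths in R iff it has a divisor in R *)
definition inI :: "('v,'e) qpath \<Rightarrow> bool" where
  "inI p \<longleftrightarrow> (\<exists>r x y. r \<in> R \<and> occ p r x y)"

definition inB :: "('v,'e) qpath \<Rightarrow> bool" where
  "inB p \<longleftrightarrow> is_path p \<and> \<not> inI p"

definition is_suffix :: "('v,'e) qpath \<Rightarrow> ('v,'e) qpath \<Rightarrow> bool" where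
  "is_suffix q p \<longleftrightarrow> (\<exists>y. occ p q (triv (ptgt p)) y)"

definition is_prefix :: "('v,'e) qpath \<Rightarrow> ('v,'e) qpath \<Rightarrow> bool" where
  "is_prefix q p \<longleftrightarrow> (\<exists>x. occ p q x (triv (psrc p)))"

(* a chain us = [u_0', u_1', ...] written left to right, composable as u_0' u_1' ... *)
definition chain :: "('v,'e) qpath list \<Rightarrow> bool" where
  "chain us \<longleftrightarrow> us \<noteq> [] \<and> (\<forall>u\<in>set us. is_path u)
     \<and> (\<forall>i. Suc i < length us \<longrightarrow> ptgt (us ! Suc i) = psrc (us ! i))"

(* left n-ambiguity decomposition: us ! 0 = u_{-1}, us ! (k+1) = u_k, p = u_{-1} u_0 ... u_n *)
definition left_decomp :: "int \<Rightarrow> ('v,'e) qpath \<Rightarrow> ('v,'e) qpath list \<Rightarrow> bool" where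
  "left_decomp n p us \<longleftrightarrow> n \<ge> -1 \<and> length us = nat (n + 2) \<and> chain us \<and> p = pcomp_list us
     \<and> fst (us ! 0) = [] \<and> snd (us ! 0) \<in> Q0
     \<and> (n \<ge> 0 \<longrightarrow> plen (us ! 1) = 1)
     \<and> (\<forall>u\<in>set us. inB u)
     \<and> (\<forall>j. 1 \<le> j \<and> j + 1 < length us \<longrightarrow>
           inI (pcomp (us ! j) (us ! (j+1)))
         \<and> (\<forall>q. is_suffix q (pcomp (us ! j) (us ! (j+1))) \<and> q \<noteq> pcomp (us ! j) (us ! (j+1))
                \<longrightarrow> \<not> inI q))"

(* right n-ambiguity decomposition: vs ! 0 = v_{-1}, vs ! (k+1) = v_k, p = v_n ... v_0 v_{-1} *)
definition right_decomp :: "int \<Rightarrow> ('v,'e) qpath \<Rightarrow> ('v,'e) qpath list \<Rightarrow> bool" where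
  "right_decomp n p vs \<longleftrightarrow> n \<ge> -1 \<and> length vs = nat (n + 2) \<and> chain (rev vs) \<and> p = pcomp_list (rev vs)
     \<and> fst (vs ! 0) = [] \<and> snd (vs ! 0) \<in> Q0
     \<and> (n \<ge> 0 \<longrightarrow> plen (vs ! 1) = 1)
     \<and> (\<forall>v\<in>set vs. inB v)
     \<and> (\<forall>j. 1 \<le> j \<and> j + 1 < length vs \<longrightarrow>
           inI (pcomp (vs ! (j+1)) (vs ! j))
         \<and> (\<forall>q. is_prefix q (pcomp (vs ! (j+1)) (vs ! j)) \<and> q \<noteq> pcomp (vs ! (j+1)) (vs ! j)
                \<longrightarrow> \<not> inI q))"

definition left_amb :: "int \<Rightarrow> ('v,'e) qpath \<Rightarrow> bool" where
  "left_amb n p \<longleftrightarrow> (\<exists>us. left_decomp n p us)"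

definition right_amb :: "int \<Rightarrow> ('v,'e) qpath \<Rightarrow> bool" where
  "right_amb n p \<longleftrightarrow> (\<exists>vs. right_decomp n p vs)"

definition Gamma :: "int \<Rightarrow> ('v,'e) qpath set" where
  "Gamma n = {p. left_amb n p \<and> right_amb n p}"

(* sigma_m(p) = u_{-1} u_0 ... u_m for the (unique) left decomposition of p in Gamma_n *)
definition sigma :: "int \<Rightarrow> int \<Rightarrow> ('v,'e) qpath \<Rightarrow> ('v,'e) qpath" where
  "sigma n m p = pcomp_list (take (nat (m + 2)) (THE us. left_decomp n p us))"

(* pi_m(p) = v_m ... v_0 v_{-1} for the (unique) right decomposition of p in Gamma_n *)
definition pi :: "int \<Rightarrow> int \<Rightarrow> ('v,'e) qpath \<Rightarrow> ('v,'e) qpath" where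
  "pi n m p = pcomp_list (rev (take (nat (m + 2)) (THE vs. right_decomp n p vs)))"

end

(* standing assumptions: finite quiver, I generated by paths of length >= 2,
   A = kQ/I finite-dimensional (finitely many paths outside I) *)
definition finite_monomial :: "'v set \<Rightarrow> 'e set \<Rightarrow> ('e \<Rightarrow> 'v) \<Rightarrow> ('e \<Rightarrow> 'v) \<Rightarrow> ('v,'e) qpath set \<Rightarrow> bool" where
  "finite_monomial Q0 Q1 s t R \<longleftrightarrow> finite Q0 \<and> finite Q1
     \<and> (\<forall>e\<in>Q1. s e \<in> Q0 \<and> t e \<in> Q0)
     \<and> (\<forall>r\<in>R. quiver_monomial.is_path Q0 Q1 s t r \<and> plen r \<ge> 2)
     \<and> finite {p. quiver_monomial.inB Q0 Q1 s t R p}"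

end

theory Submission
  imports Defs
begin


definition LC :: "(nat \<Rightarrow> nat \<Rightarrow> bool) \<Rightarrow> nat \<Rightarrow> nat \<Rightarrow> nat \<Rightarrow> (nat \<Rightarrow> nat) \<Rightarrow> bool" where
"LC J m lo hi c \<longleftrightarrow> c 0 = lo \<and> c m = hi \<and> (0 < m \<longrightarrow> c 1 = Suc lo)
   \<and> (\<forall>k<m. \<not> J (c k) (c (Suc k)) \<and> c k \<le> c (Suc k))
   \<and> (\<forall>k. Suc (Suc k) \<le> m \<longrightarrow> J (c k) (c (Suc (Suc k))) \<and> (\<forall>x. c k \<le> x \<and> x < c (Suc (Suc k)) \<longrightarrow> \<not> J (c k) x))"

definition RC :: "(nat \<Rightarrow> nat \<Rightarrow> bool) \<Rightarrow> nat \<Rightarrow> nat \<Rightarrow> nat \<Rightarrow> (nat \<Rightarrow> nat) \<Rightarrow> bool" where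
"RC J m lo hi d \<longleftrightarrow> d 0 = hi \<and> d m = lo \<and> (0 < m \<longrightarrow> d 1 = hi - 1 \<and> lo < hi)
   \<and> (\<forall>k<m. \<not> J (d (Suc k)) (d k) \<and> d (Suc k) \<le> d k)
   \<and> (\<forall>k. Suc (Suc k) \<le> m \<longrightarrow> J (d (Suc (Suc k))) (d k) \<and> (\<forall>x. d (Suc (Suc k)) < x \<and> x \<le> d k \<longrightarrow> \<not> J x (d k)))"

definition JMONO :: "(nat \<Rightarrow> nat \<Rightarrow> bool) \<Rightarrow> nat \<Rightarrow> nat \<Rightarrow> bool" where
"JMONO J lo hi \<longleftrightarrow> (\<forall>i' i j j'. lo \<le> i' \<longrightarrow> i' \<le> i \<longrightarrow> i \<le> j \<longrightarrow> j \<le> j' \<longrightarrow> j' \<le> hi \<longrightarrow> J i j \<longrightarrow> J i' j')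
   \<and> (\<forall>i. \<not> J i i \<and> \<not> J i (Suc i))"

lemma LC_mono: "LC J m lo hi c \<Longrightarrow> a \<le> b \<Longrightarrow> b \<le> m \<Longrightarrow> c a \<le> c b"
proof (induction b)
  case (Suc b)
  show ?case
  proof (cases "a = Suc b")
    case False
    then have ab: "a \<le> b" using Suc.prems by simp
    then have IH: "c a \<le> c b" using Suc by simp
    have "c b \<le> c (Suc b)" using Suc.prems unfolding LC_def by auto
    then show ?thesis using IH by simp
  qed simp
qed simp

lemma LC_bounds: "LC J m lo hi c \<Longrightarrow> k \<le> m \<Longrightarrow> lo \<le> c k \<and> c k \<le> hi"
  using LC_mono[of J m lo hi c 0 k] LC_mono[of J m lo hi c k m] by (auto simp: LC_def)

lemma RC_mono: "RC J m lo hi d \<Longrightarrow> a \<le> b \<Longrightarrow> b \<le> m \<Longrightarrow> d b \<le> d a"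
proof (induction b)
  case (Suc b)
  show ?case
  proof (cases "a = Suc b")
    case False
    then have ab: "a \<le> b" using Suc.prems by simp
    then have IH: "d b \<le> d a" using Suc by simp
    have "d (Suc b) \<le> d b" using Suc.prems unfolding RC_def by auto
    then show ?thesis using IH by simp
  qed simp
qed simp

lemma RC_bounds: "RC J m lo hi d \<Longrightarrow> k \<le> m \<Longrightarrow> lo \<le> d k \<and> d k \<le> hi"
  using RC_mono[of J m lo hi d 0 k] RC_mono[of J m lo hi d k m] by (auto simp: RC_def)

lemma LC_uniq: "LC J m lo hi c \<Longrightarrow> LC J m lo hi c' \<Longrightarrow> k \<le> m \<Longrightarrow> c k = c' k"
proof (induction k rule: nat_less_induct)
  case (1 k)
  show ?case
  proof (cases k)
    case 0 then show ?thesis using "1.prems" by (simp add: LC_def)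
  next
    case (Suc k1)
    show ?thesis
    proof (cases k1)
      case 0 then show ?thesis using "1.prems" Suc by (simp add: LC_def)
    next
      case (Suc k2)
      have e: "c k2 = c' k2" using "1.IH" "1.prems" \<open>k = Suc k1\<close> Suc by auto
      have k: "Suc (Suc k2) \<le> m" using "1.prems" \<open>k = Suc k1\<close> Suc by simp
      have a: "J (c k2) (c k)" "\<forall>x. c k2 \<le> x \<and> x < c k \<longrightarrow> \<not> J (c k2) x"
        using "1.prems"(1) k \<open>k = Suc k1\<close> Suc unfolding LC_def by auto
      have b: "J (c' k2) (c' k)" "\<forall>x. c' k2 \<le> x \<and> x < c' k \<longrightarrow> \<not> J (c' k2) x"
        using "1.prems"(2) k \<open>k = Suc k1\<close> Suc unfolding LC_def by auto
      have m1: "c k2 \<le> c k" using LC_mono[OF "1.prems"(1), of k2 k] k \<open>k = Suc k1\<close> Suc by simp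
      have m2: "c' k2 \<le> c' k" using LC_mono[OF "1.prems"(2), of k2 k] k \<open>k = Suc k1\<close> Suc by simp
      show ?thesis
      proof (rule linorder_cases[of "c k" "c' k"])
        assume "c k < c' k" then show ?thesis using b(2) a(1) e m1 m2 by force
      next
        assume "c k > c' k" then show ?thesis using a(2) b(1) e m1 m2 by force
      qed
    qed
  qed
qed

lemma RC_uniq: "RC J m lo hi d \<Longrightarrow> RC J m lo hi d' \<Longrightarrow> k \<le> m \<Longrightarrow> d k = d' k"
proof (induction k rule: nat_less_induct)
  case (1 k)
  show ?case
  proof (cases k)
    case 0 then show ?thesis using "1.prems" by (simp add: RC_def)
  next
    case (Suc k1)
    show ?thesis
    proof (cases k1)
      case 0 then show ?thesis using "1.prems" Suc by (simp add: RC_def)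
    next
      case (Suc k2)
      have e: "d k2 = d' k2" using "1.IH" "1.prems" \<open>k = Suc k1\<close> Suc by auto
      have k: "Suc (Suc k2) \<le> m" using "1.prems" \<open>k = Suc k1\<close> Suc by simp
      have a: "J (d k) (d k2)" "\<forall>x. d k < x \<and> x \<le> d k2 \<longrightarrow> \<not> J x (d k2)"
        using "1.prems"(1) k \<open>k = Suc k1\<close> Suc unfolding RC_def by auto
      have b: "J (d' k) (d' k2)" "\<forall>x. d' k < x \<and> x \<le> d' k2 \<longrightarrow> \<not> J x (d' k2)"
        using "1.prems"(2) k \<open>k = Suc k1\<close> Suc unfolding RC_def by auto
      have m1: "d k \<le> d k2" using RC_mono[OF "1.prems"(1), of k2 k] k \<open>k = Suc k1\<close> Suc by simp
      have m2: "d' k \<le> d' k2" using RC_mono[OF "1.prems"(2), of k2 k] k \<open>k = Suc k1\<close> Suc by simp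
      show ?thesis
      proof (rule linorder_cases[of "d k" "d' k"])
        assume "d k < d' k" then show ?thesis using a(2) b(1) e m1 m2 by force
      next
        assume "d k > d' k" then show ?thesis using b(2) a(1) e m1 m2 by force
      qed
    qed
  qed
qed

fun dseq :: "(nat \<Rightarrow> nat) \<Rightarrow> nat \<Rightarrow> nat \<Rightarrow> nat" where
  "dseq g hi 0 = hi"
| "dseq g hi (Suc 0) = hi - 1"
| "dseq g hi (Suc (Suc k)) = g (dseq g hi k)"


lemma LC_strict: "LC J m lo hi c \<Longrightarrow> JMONO J lo hi \<Longrightarrow> k < m \<Longrightarrow> c k < c (Suc k)"
proof -
  assume L: "LC J m lo hi c" and M: "JMONO J lo hi" and k: "k < m"
  show ?thesis
  proof (cases k)
    case 0 then show ?thesis using L k by (simp add: LC_def)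
  next
    case (Suc k')
    have r: "J (c k') (c (Suc (Suc k')))" using L k Suc unfolding LC_def by auto
    have n: "\<not> J (c k') (c (Suc k'))" using L k Suc unfolding LC_def by auto
    have b: "lo \<le> c k'" "c (Suc k') \<le> hi" using LC_bounds[OF L, of k'] LC_bounds[OF L, of "Suc k'"] k Suc by auto
    have o: "c k' \<le> c (Suc (Suc k'))" using LC_mono[OF L, of k' "Suc (Suc k')"] k Suc by simp
    show ?thesis
    proof (rule ccontr)
      assume "\<not> c k < c (Suc k)"
      then have "c (Suc (Suc k')) \<le> c (Suc k')" using Suc by simp
      then have "J (c k') (c (Suc k'))" using M r b o unfolding JMONO_def by blast
      then show False using n by simp
    qed
  qed
qed

lemma LR:
  assumes M: "JMONO J lo hi" and L: "LC J m lo hi c"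
  shows "\<exists>d. RC J m lo hi d"
proof -
  have mono: "\<And>i' i j j'. lo \<le> i' \<Longrightarrow> i' \<le> i \<Longrightarrow> i \<le> j \<Longrightarrow> j \<le> j' \<Longrightarrow> j' \<le> hi \<Longrightarrow> J i j \<Longrightarrow> J i' j'"
    using M unfolding JMONO_def by blast
  have c0: "c 0 = lo" and cm: "c m = hi" and c1: "0 < m \<Longrightarrow> c 1 = Suc lo"
    and st: "\<And>k. k < m \<Longrightarrow> \<not> J (c k) (c (Suc k))"
    and rl: "\<And>k. Suc (Suc k) \<le> m \<Longrightarrow> J (c k) (c (Suc (Suc k)))"
    and mn: "\<And>k x. Suc (Suc k) \<le> m \<Longrightarrow> c k \<le> x \<Longrightarrow> x < c (Suc (Suc k)) \<Longrightarrow> \<not> J (c k) x"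
    using L unfolding LC_def by auto
  have cmo: "\<And>a b. a \<le> b \<Longrightarrow> b \<le> m \<Longrightarrow> c a \<le> c b" using LC_mono[OF L] by blast
  have cb: "\<And>k. k \<le> m \<Longrightarrow> lo \<le> c k \<and> c k \<le> hi" using LC_bounds[OF L] by blast
  have cs: "\<And>k. k < m \<Longrightarrow> c k < c (Suc k)" using LC_strict[OF L M] by blast
  define g where "g j = Max {x. x \<le> j \<and> J x j}" for j
  have gprop: "\<And>j y. J y j \<Longrightarrow> y \<le> j \<Longrightarrow> J (g j) j \<and> y \<le> g j \<and> g j \<le> j \<and> (\<forall>x. J x j \<and> x \<le> j \<longrightarrow> x \<le> g j)"
  proof -
    fix j y assume "J y j" "y \<le> j"
    have fin: "finite {x. x \<le> j \<and> J x j}" by simp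
    have ne: "y \<in> {x. x \<le> j \<and> J x j}" using \<open>J y j\<close> \<open>y \<le> j\<close> by simp
    have "g j \<in> {x. x \<le> j \<and> J x j}" unfolding g_def using Max_in[OF fin] ne by blast
    moreover have "\<forall>x. J x j \<and> x \<le> j \<longrightarrow> x \<le> g j" unfolding g_def using Max_ge[OF fin] by blast
    ultimately show "J (g j) j \<and> y \<le> g j \<and> g j \<le> j \<and> (\<forall>x. J x j \<and> x \<le> j \<longrightarrow> x \<le> g j)"
      using ne by blast
  qed
  define d where "d = dseq g hi"
  have d0: "d 0 = hi" and d1: "d (Suc 0) = hi - 1" and dSS: "\<And>k. d (Suc (Suc k)) = g (d k)"
    by (simp_all add: d_def)
  have inv: "\<And>k. k \<le> m \<Longrightarrow> c (m-k) \<le> d k \<and> d k \<le> hi \<and> (1 \<le> k \<longrightarrow> d k < c (Suc (m-k)))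
      \<and> (k < m \<longrightarrow> \<not> J (c (m-k-1)) (d k))"
  proof -
    fix k
    show "k \<le> m \<Longrightarrow> c (m-k) \<le> d k \<and> d k \<le> hi \<and> (1 \<le> k \<longrightarrow> d k < c (Suc (m-k)))
      \<and> (k < m \<longrightarrow> \<not> J (c (m-k-1)) (d k))"
    proof (induction k rule: nat_less_induct)
      case (1 k)
      show ?case
      proof (cases k)
        case 0
        have "0 < m \<Longrightarrow> \<not> J (c (m-1)) (c m)" using st[of "m-1"] by simp
        then show ?thesis using 0 d0 cm by simp
      next
        case (Suc k1)
        show ?thesis
        proof (cases k1)
          case 0
          have k: "k = 1" "1 \<le> m" using Suc 0 "1.prems" by auto
          have a: "c (m-1) < hi" using cs[of "m-1"] k cm by simp
          have b: "1 < m \<Longrightarrow> \<not> J (c (m-2)) (hi - 1)"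
          proof -
            assume "1 < m"
            then have "c (m-2) \<le> c (m-1)" using cmo by simp
            then show ?thesis using mn[of "m-2" "hi-1"] a \<open>1 < m\<close> cm
              by (simp add: Suc_diff_Suc numeral_2_eq_2)
          qed
          show ?thesis using a b k d1 cm by (auto simp: numeral_2_eq_2)
        next
          case (Suc k2)
          have kk: "k = Suc (Suc k2)" using Suc \<open>k = Suc k1\<close> by simp
          have km: "Suc (Suc k2) \<le> m" using kk "1.prems" by simp
          have IH: "c (m-k2) \<le> d k2 \<and> d k2 \<le> hi \<and> (1 \<le> k2 \<longrightarrow> d k2 < c (Suc (m-k2)))
             \<and> (k2 < m \<longrightarrow> \<not> J (c (m-k2-1)) (d k2))" using "1.IH" kk km by auto
          define A where "A = m - k"
          have A2: "Suc (Suc A) = m - k2" using A_def kk km by simp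
          have JA: "J (c A) (c (m - k2))" using rl[of A] A2 km by simp
          have bA: "lo \<le> c A" "c A \<le> c (m-k2)" using cb[of A] cmo[of A "m-k2"] A_def A2 by auto
          have JAd: "J (c A) (d k2)" using mono[OF bA(1) order_refl _ _ _ JA] bA IH by auto
          have gp: "J (g (d k2)) (d k2) \<and> c A \<le> g (d k2) \<and> g (d k2) \<le> d k2"
            using gprop[OF JAd] bA IH by auto
          have dk: "d k = g (d k2)" using dSS kk by simp
          have p1: "c (m-k) \<le> d k" using gp dk A_def by simp
          have p2: "d k \<le> hi" using gp dk IH by simp
          have e1: "m - k2 - 1 = Suc (m - k)" using kk km by simp
          have p3: "d k < c (Suc (m-k))"
          proof (rule ccontr)
            assume "\<not> d k < c (Suc (m - k))"
            then have le: "c (Suc (m-k)) \<le> d k" by simp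
            have "lo \<le> c (Suc (m-k))" using cb[of "Suc (m-k)"] kk km by simp
            then have "J (c (Suc (m-k))) (d k2)" using mono[of "c (Suc (m-k))" "d k" "d k2" "d k2"] le gp dk IH by auto
            then show False using IH e1 km by auto
          qed
          have p4: "k < m \<Longrightarrow> \<not> J (c (m-k-1)) (d k)"
          proof -
            assume "k < m"
            then have e2: "Suc (Suc (m-k-1)) = Suc (m-k)" "Suc (m - k) \<le> m" using kk by arith+
            have "c (m-k-1) \<le> c (m-k)" using cmo by simp
            then show ?thesis using mn[of "m-k-1" "d k"] e2 p1 p3 by simp
          qed
          show ?thesis using p1 p2 p3 p4 by simp
        qed
      qed
    qed
  qed
  have R1: "d m = lo"
  proof (cases m)
    case 0 then show ?thesis using d0 cm c0 by simp
  next
    case (Suc m')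
    then show ?thesis using inv[of m] c0 c1 by simp
  qed
  have R2: "0 < m \<longrightarrow> d 1 = hi - 1 \<and> lo < hi"
  proof
    assume "0 < m"
    then have "c 0 < c m" using cs[of 0] cmo[of 1 m] by simp
    then show "d 1 = hi - 1 \<and> lo < hi" using d1 c0 cm by simp
  qed
  have R3: "\<forall>k<m. \<not> J (d (Suc k)) (d k) \<and> d (Suc k) \<le> d k"
  proof (intro allI impI)
    fix k assume k: "k < m"
    have i1: "c (m-k) \<le> d k \<and> d k \<le> hi \<and> (k < m \<longrightarrow> \<not> J (c (m-k-1)) (d k))" using inv[of k] k by simp
    have i2: "c (m - Suc k) \<le> d (Suc k) \<and> d (Suc k) < c (Suc (m - Suc k))" using inv[of "Suc k"] k by simp
    have e: "Suc (m - Suc k) = m - k" using k by simp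
    have le: "d (Suc k) \<le> d k" using i1 i2 e by simp
    have lo: "lo \<le> c (m - Suc k)" using cb by simp
    show "\<not> J (d (Suc k)) (d k) \<and> d (Suc k) \<le> d k"
    proof
      show "\<not> J (d (Suc k)) (d k)"
      proof
        assume "J (d (Suc k)) (d k)"
        then have "J (c (m - Suc k)) (d k)" using mono[OF lo _ le order_refl] i1 i2 by blast
        moreover have "m - Suc k = m - k - 1" by simp
        ultimately show False using i1 k by metis
      qed
    qed (rule le)
  qed
  have R4: "\<forall>k. Suc (Suc k) \<le> m \<longrightarrow> J (d (Suc (Suc k))) (d k) \<and> (\<forall>x. d (Suc (Suc k)) < x \<and> x \<le> d k \<longrightarrow> \<not> J x (d k))"
  proof (intro allI impI)
    fix k assume km: "Suc (Suc k) \<le> m"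
    have IH: "c (m-k) \<le> d k \<and> d k \<le> hi" using inv[of k] km by simp
    define A where "A = m - Suc (Suc k)"
    have A2: "Suc (Suc A) = m - k" using A_def km by simp
    have JA: "J (c A) (c (m - k))" using rl[of A] A2 km by simp
    have bA: "lo \<le> c A" "c A \<le> c (m-k)" using cb[of A] cmo[of A "m-k"] A_def A2 by auto
    have JAd: "J (c A) (d k)" using mono[OF bA(1) order_refl _ _ _ JA] bA IH by auto
    have gp: "J (g (d k)) (d k) \<and> (\<forall>x. J x (d k) \<and> x \<le> d k \<longrightarrow> x \<le> g (d k))"
      using gprop[OF JAd] bA IH by auto
    then show "J (d (Suc (Suc k))) (d k) \<and> (\<forall>x. d (Suc (Suc k)) < x \<and> x \<le> d k \<longrightarrow> \<not> J x (d k))"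
      using dSS[of k] by auto
  qed
  have "RC J m lo hi d" unfolding RC_def using d0 R1 R2 R3 R4 by simp
  then show ?thesis by blast
qed


lemma dual_JMONO: "JMONO J lo hi \<Longrightarrow> JMONO (\<lambda>x y. J (lo+hi-y) (lo+hi-x)) lo hi"
proof -
  assume M: "JMONO J lo hi"
  have mono: "\<And>i' i j j'. lo \<le> i' \<Longrightarrow> i' \<le> i \<Longrightarrow> i \<le> j \<Longrightarrow> j \<le> j' \<Longrightarrow> j' \<le> hi \<Longrightarrow> J i j \<Longrightarrow> J i' j'"
    and sh: "\<And>i. \<not> J i i" "\<And>i. \<not> J i (Suc i)"
    using M unfolding JMONO_def by blast+
  have A: "\<forall>i' i j j'. lo \<le> i' \<longrightarrow> i' \<le> i \<longrightarrow> i \<le> j \<longrightarrow> j \<le> j' \<longrightarrow> j' \<le> hi \<longrightarrow>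
      J (lo+hi-j) (lo+hi-i) \<longrightarrow> J (lo+hi-j') (lo+hi-i')"
  proof (intro allI impI)
    fix i' i j j' assume h: "lo \<le> i'" "i' \<le> i" "i \<le> j" "j \<le> j'" "j' \<le> hi" "J (lo+hi-j) (lo+hi-i)"
    show "J (lo+hi-j') (lo+hi-i')"
      by (rule mono[OF _ _ _ _ _ h(6)]) (use h in auto)
  qed
  have B: "\<forall>i. \<not> J (lo+hi-i) (lo+hi-i) \<and> \<not> J (lo+hi-Suc i) (lo+hi-i)"
  proof
    fix i
    show "\<not> J (lo+hi-i) (lo+hi-i) \<and> \<not> J (lo+hi-Suc i) (lo+hi-i)"
    proof (cases "lo + hi - Suc i = lo + hi - i")
      case True then show ?thesis using sh by simp
    next
      case False
      then have "lo + hi - i = Suc (lo + hi - Suc i)" by arith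
      then show ?thesis using sh by metis
    qed
  qed
  show ?thesis unfolding JMONO_def using A B by simp
qed

lemma dual_RC_LC: "RC J m lo hi d \<Longrightarrow> LC (\<lambda>x y. J (lo+hi-y) (lo+hi-x)) m lo hi (\<lambda>k. lo+hi - d k)"
proof -
  assume R: "RC J m lo hi d"
  have b: "\<And>k. k \<le> m \<Longrightarrow> lo \<le> d k \<and> d k \<le> hi" using RC_bounds[OF R] by blast
  have e: "\<And>k. k \<le> m \<Longrightarrow> lo + hi - (lo + hi - d k) = d k" using b by fastforce
  have d0: "d 0 = hi" and dm: "d m = lo" and d1: "0 < m \<Longrightarrow> d 1 = hi - 1 \<and> lo < hi"
    and st: "\<And>k. k < m \<Longrightarrow> \<not> J (d (Suc k)) (d k) \<and> d (Suc k) \<le> d k"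
    and rl: "\<And>k. Suc (Suc k) \<le> m \<Longrightarrow> J (d (Suc (Suc k))) (d k)"
    and mx: "\<And>k x. Suc (Suc k) \<le> m \<Longrightarrow> d (Suc (Suc k)) < x \<Longrightarrow> x \<le> d k \<Longrightarrow> \<not> J x (d k)"
    using R unfolding RC_def by auto
  show ?thesis unfolding LC_def
  proof (intro conjI allI impI)
    show "lo + hi - d 0 = lo" using d0 by simp
    show "lo + hi - d m = hi" using dm by simp
  next
    assume "0 < m" then show "lo + hi - d 1 = Suc lo" using d1 by auto
  next
    fix k assume k: "k < m"
    show "\<not> J (lo + hi - (lo + hi - d (Suc k))) (lo + hi - (lo + hi - d k))"
      using st[OF k] e[of k] e[of "Suc k"] k by simp
    show "lo + hi - d k \<le> lo + hi - d (Suc k)" using st[OF k] diff_le_mono2 by blast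
  next
    fix k assume k: "Suc (Suc k) \<le> m"
    show "J (lo + hi - (lo + hi - d (Suc (Suc k)))) (lo + hi - (lo + hi - d k))"
      using rl[OF k] e[of k] e[of "Suc (Suc k)"] k by simp
  next
    fix k x assume k: "Suc (Suc k) \<le> m" and x: "lo + hi - d k \<le> x \<and> x < lo + hi - d (Suc (Suc k))"
    have bk: "lo \<le> d k" "d k \<le> hi" "lo \<le> d (Suc (Suc k))" using b[of k] b[of "Suc (Suc k)"] k by auto
    have "d (Suc (Suc k)) < lo + hi - x" "lo + hi - x \<le> d k" using x bk by arith+
    then have "\<not> J (lo + hi - x) (d k)" using mx[OF k] by blast
    then show "\<not> J (lo + hi - x) (lo + hi - (lo + hi - d k))" using e[of k] k by simp
  qed
qed

lemma dual_RC_LC2: "RC (\<lambda>x y. J (lo+hi-y) (lo+hi-x)) m lo hi d \<Longrightarrow> LC J m lo hi (\<lambda>k. lo+hi - d k)"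
proof -
  let ?J = "\<lambda>x y. J (lo+hi-y) (lo+hi-x)"
  assume R: "RC ?J m lo hi d"
  have b: "\<And>k. k \<le> m \<Longrightarrow> lo \<le> d k \<and> d k \<le> hi" using RC_bounds[OF R] by blast
  have d0: "d 0 = hi" and dm: "d m = lo" and d1: "0 < m \<Longrightarrow> d 1 = hi - 1 \<and> lo < hi"
    and st: "\<And>k. k < m \<Longrightarrow> \<not> ?J (d (Suc k)) (d k) \<and> d (Suc k) \<le> d k"
    and rl: "\<And>k. Suc (Suc k) \<le> m \<Longrightarrow> ?J (d (Suc (Suc k))) (d k)"
    and mx: "\<And>k x. Suc (Suc k) \<le> m \<Longrightarrow> d (Suc (Suc k)) < x \<Longrightarrow> x \<le> d k \<Longrightarrow> \<not> ?J x (d k)"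
    using R unfolding RC_def by blast+
  show ?thesis unfolding LC_def
  proof (intro conjI allI impI)
    show "lo + hi - d 0 = lo" using d0 by simp
    show "lo + hi - d m = hi" using dm by simp
  next
    assume "0 < m" then show "lo + hi - d 1 = Suc lo" using d1 by auto
  next
    fix k assume k: "k < m"
    show "\<not> J (lo + hi - d k) (lo + hi - d (Suc k))"
      using st[OF k] by simp
    show "lo + hi - d k \<le> lo + hi - d (Suc k)" using st[OF k] diff_le_mono2 by blast
  next
    fix k assume k: "Suc (Suc k) \<le> m"
    show "J (lo + hi - d k) (lo + hi - d (Suc (Suc k)))"
      using rl[OF k] by simp
  next
    fix k x assume k: "Suc (Suc k) \<le> m" and x: "lo + hi - d k \<le> x \<and> x < lo + hi - d (Suc (Suc k))"
    have bk: "lo \<le> d k" "d k \<le> hi" "lo \<le> d (Suc (Suc k))" using b[of k] b[of "Suc (Suc k)"] k by auto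
    have y: "d (Suc (Suc k)) < lo + hi - x" "lo + hi - x \<le> d k" using x bk by arith+
    have "x \<le> lo + hi" using x by arith
    then have "lo + hi - (lo + hi - x) = x" by simp
    then show "\<not> J (lo + hi - d k) x" using mx[OF k y] by simp
  qed
qed

lemma RL:
  assumes M: "JMONO J lo hi" and R: "RC J m lo hi d"
  shows "\<exists>c. LC J m lo hi c"
proof -
  let ?J = "\<lambda>x y. J (lo+hi-y) (lo+hi-x)"
  have "LC ?J m lo hi (\<lambda>k. lo+hi - d k)" by (rule dual_RC_LC[OF R])
  then obtain d' where "RC ?J m lo hi d'" using LR[OF dual_JMONO[OF M]] by blast
  then show ?thesis using dual_RC_LC2 by blast
qed


lemma EXT1:
  assumes M: "JMONO J 0 NN" and lt: "\<forall>i j. J i j \<longrightarrow> i < j"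
    and L1: "LC J m 0 m1 c1" and L2: "LC J m m2 NN c2" and ev: "even m"
    and m2: "0 < m2" and m1: "m1 < NN" and nJ: "\<not> J m1 NN"
  shows "\<exists>e1 c'. LC J (Suc m) 0 e1 c' \<and> (\<forall>k\<le>m. c' k = c1 k) \<and> m1 < e1 \<and> e1 \<le> NN"
proof (cases "m = 0")
  case True
  then have m10: "m1 = 0" "c1 0 = 0" using L1 by (auto simp: LC_def)
  have sh: "\<not> J 0 1" using M by (simp add: JMONO_def)
  define c' where "c' k = (if k = 0 then 0 else (1::nat))" for k :: nat
  have "LC J (Suc m) 0 1 c'" using True sh unfolding LC_def c'_def by auto
  moreover have "\<forall>k\<le>m. c' k = c1 k" using True m10 c'_def by simp
  moreover have "0 < (1::nat)" "1 \<le> NN" using m1 m10 by auto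
  ultimately show ?thesis using m10 by blast
next
  case False
  obtain h where h: "m = 2 * h" using ev by blast
  then have h1: "1 \<le> h" using False by simp
  have mono: "\<And>i' i j j'. i' \<le> i \<Longrightarrow> i \<le> j \<Longrightarrow> j \<le> j' \<Longrightarrow> j' \<le> NN \<Longrightarrow> J i j \<Longrightarrow> J i' j'"
    using M unfolding JMONO_def by blast
  have c10: "c1 0 = 0" and c1m: "c1 m = m1" and c11: "c1 1 = 1"
    and st1: "\<And>k. k < m \<Longrightarrow> \<not> J (c1 k) (c1 (Suc k))"
    and rl1: "\<And>k. Suc (Suc k) \<le> m \<Longrightarrow> J (c1 k) (c1 (Suc (Suc k)))"
    and mn1: "\<And>k x. Suc (Suc k) \<le> m \<Longrightarrow> c1 k \<le> x \<Longrightarrow> x < c1 (Suc (Suc k)) \<Longrightarrow> \<not> J (c1 k) x"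
    using L1 False unfolding LC_def by auto
  have c20: "c2 0 = m2" and c2m: "c2 m = NN"
    and rl2: "\<And>k. Suc (Suc k) \<le> m \<Longrightarrow> J (c2 k) (c2 (Suc (Suc k)))"
    using L2 unfolding LC_def by auto
  have cmo1: "\<And>a b. a \<le> b \<Longrightarrow> b \<le> m \<Longrightarrow> c1 a \<le> c1 b" using LC_mono[OF L1] by blast
  have cmo2: "\<And>a b. a \<le> b \<Longrightarrow> b \<le> m \<Longrightarrow> c2 a \<le> c2 b" using LC_mono[OF L2] by blast
  have cb1: "\<And>k. k \<le> m \<Longrightarrow> c1 k \<le> m1" using LC_bounds[OF L1] by blast
  have cb2: "\<And>k. k \<le> m \<Longrightarrow> m2 \<le> c2 k \<and> c2 k \<le> NN" using LC_bounds[OF L2] by blast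
  have claim: "\<And>j. Suc (2*j) < m \<Longrightarrow> c1 (Suc (2*j)) \<le> c2 (2*j)"
  proof -
    fix j show "Suc (2*j) < m \<Longrightarrow> c1 (Suc (2*j)) \<le> c2 (2*j)"
    proof (induction j)
      case 0 then show ?case using c11 c20 m2 by simp
    next
      case (Suc j)
      have IH: "c1 (Suc (2*j)) \<le> c2 (2*j)" using Suc by simp
      have k1: "Suc (Suc (2*j)) \<le> m" and k2: "Suc (Suc (Suc (2*j))) \<le> m" using Suc.prems by auto
      have J2: "J (c2 (2*j)) (c2 (Suc (Suc (2*j))))" using rl2[OF k1] .
      have b: "c2 (2*j) \<le> c2 (Suc (Suc (2*j)))" "c2 (Suc (Suc (2*j))) \<le> NN"
        using cmo2[of "2*j" "Suc (Suc (2*j))"] cb2[of "Suc (Suc (2*j))"] k1 by auto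
      have JA: "J (c1 (Suc (2*j))) (c2 (Suc (Suc (2*j))))" using mono[OF IH b(1) order_refl b(2) J2] by simp
      show ?case
      proof (rule ccontr)
        assume "\<not> c1 (Suc (2 * Suc j)) \<le> c2 (2 * Suc j)"
        then have "c2 (Suc (Suc (2*j))) < c1 (Suc (Suc (Suc (2*j))))" by simp
        then have "\<not> J (c1 (Suc (2*j))) (c2 (Suc (Suc (2*j))))"
          using mn1[OF k2] IH b(1) by simp
        then show False using JA by simp
      qed
    qed
  qed
  have e1: "m - 1 = Suc (2*(h-1))" "m - 2 = 2*(h-1)" "Suc (Suc (m - 2)) = m" "Suc (m - 1) = m"
    using h h1 by auto
  have A: "c1 (m-1) \<le> c2 (m-2)" using claim[of "h-1"] e1 h h1 by simp
  have J2: "J (c2 (m-2)) NN" using rl2[of "m-2"] e1 c2m by simp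
  have JA: "J (c1 (m-1)) NN" using mono[OF A _ order_refl order_refl J2] cmo2[of "m-2" m] c2m by simp
  define e where "e = (LEAST x. J (c1 (m-1)) x)"
  have Je: "J (c1 (m-1)) e" unfolding e_def using LeastI[of "J (c1 (m-1))", OF JA] .
  have eN: "e \<le> NN" unfolding e_def using Least_le[of "J (c1 (m-1))", OF JA] .
  have emin: "\<And>x. x < e \<Longrightarrow> \<not> J (c1 (m-1)) x" unfolding e_def using not_less_Least by blast
  have lt1: "c1 (m-1) < e" using lt Je by blast
  have nm1: "\<not> J (c1 (m-1)) m1" using st1[of "m-1"] e1 c1m by simp
  have me: "m1 < e"
  proof (rule ccontr)
    assume "\<not> m1 < e"
    then have "e \<le> m1" by simp
    then have "J (c1 (m-1)) m1" using mono[OF order_refl _ _ _ Je] lt1 m1 by simp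
    then show False using nm1 by simp
  qed
  have nme: "\<not> J m1 e"
  proof
    assume "J m1 e"
    then have "J m1 NN" using mono[OF order_refl _ eN order_refl] me by simp
    then show False using nJ by simp
  qed
  define c' where "c' k = (if k \<le> m then c1 k else e)" for k :: nat
  have "LC J (Suc m) 0 e c'" unfolding LC_def
  proof (intro conjI allI impI)
    show "c' 0 = 0" using c10 c'_def by simp
    show "c' (Suc m) = e" using c'_def by simp
    show "c' 1 = Suc 0" using c11 c'_def False by simp
  next
    fix k assume k: "k < Suc m"
    show "\<not> J (c' k) (c' (Suc k))"
    proof (cases "k < m")
      case True then show ?thesis using st1[OF True] c'_def by simp
    next
      case False then have "k = m" using k by simp
      then show ?thesis using nme c1m c'_def by simp
    qed
    show "c' k \<le> c' (Suc k)"
    proof (cases "k < m")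
      case True then show ?thesis using cmo1[of k "Suc k"] c'_def by simp
    next
      case False then have "k = m" using k by simp
      then show ?thesis using me c1m c'_def by simp
    qed
  next
    fix k assume k: "Suc (Suc k) \<le> Suc m"
    show "J (c' k) (c' (Suc (Suc k)))"
    proof (cases "Suc (Suc k) \<le> m")
      case True then show ?thesis using rl1[OF True] c'_def by simp
    next
      case False then have "k = m - 1" using k by simp
      then show ?thesis using Je c'_def False e1 by simp
    qed
  next
    fix k x assume k: "Suc (Suc k) \<le> Suc m" and x: "c' k \<le> x \<and> x < c' (Suc (Suc k))"
    show "\<not> J (c' k) x"
    proof (cases "Suc (Suc k) \<le> m")
      case True then show ?thesis using mn1[OF True] x c'_def by simp
    next
      case False then have "k = m - 1" using k by simp
      then show ?thesis using emin x c'_def False e1 by simp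
    qed
  qed
  moreover have "\<forall>k\<le>m. c' k = c1 k" using c'_def by simp
  ultimately show ?thesis using me eN by blast
qed


lemma EXT2:
  assumes M: "JMONO J 0 NN"
    and R2: "RC J m m2 NN d2" and R1: "RC J m 0 m1 d1" and ev: "even m"
    and m1: "m1 < NN" and nJ: "\<not> J 0 m2"
  shows "\<exists>s2 d'. RC J (Suc m) s2 NN d' \<and> (\<forall>k\<le>m. d' k = d2 k) \<and> s2 < m2"
proof (cases "m = 0")
  case True
  then have m20: "m2 = NN" "d2 0 = NN" using R2 by (auto simp: RC_def)
  have sh: "\<not> J (NN - 1) NN" using M m1 unfolding JMONO_def by (metis Suc_diff_1 gr_zeroI less_nat_zero_code)
  define d' where "d' k = (if k = 0 then NN else NN - 1)" for k :: nat
  have "RC J (Suc m) (NN - 1) NN d'" using True sh m1 unfolding RC_def d'_def by auto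
  moreover have "\<forall>k\<le>m. d' k = d2 k" using True m20 d'_def by simp
  moreover have "NN - 1 < m2" using m20 m1 by simp
  ultimately show ?thesis by blast
next
  case False
  obtain h where h: "m = 2 * h" using ev by blast
  then have h1: "1 \<le> h" using False by simp
  have mono: "\<And>i' i j j'. i' \<le> i \<Longrightarrow> i \<le> j \<Longrightarrow> j \<le> j' \<Longrightarrow> j' \<le> NN \<Longrightarrow> J i j \<Longrightarrow> J i' j'"
    using M unfolding JMONO_def by blast
  have d10: "d1 0 = m1" and d1m: "d1 m = 0"
    and rl1: "\<And>k. Suc (Suc k) \<le> m \<Longrightarrow> J (d1 (Suc (Suc k))) (d1 k)"
    using R1 unfolding RC_def by auto
  have d20: "d2 0 = NN" and d2m: "d2 m = m2" and d21: "d2 1 = NN - 1"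
    and st2: "\<And>k. k < m \<Longrightarrow> \<not> J (d2 (Suc k)) (d2 k)"
    and rl2: "\<And>k. Suc (Suc k) \<le> m \<Longrightarrow> J (d2 (Suc (Suc k))) (d2 k)"
    and mx2: "\<And>k x. Suc (Suc k) \<le> m \<Longrightarrow> d2 (Suc (Suc k)) < x \<Longrightarrow> x \<le> d2 k \<Longrightarrow> \<not> J x (d2 k)"
    using R2 False unfolding RC_def by auto
  have dmo1: "\<And>a b. a \<le> b \<Longrightarrow> b \<le> m \<Longrightarrow> d1 b \<le> d1 a" using RC_mono[OF R1] by blast
  have dmo2: "\<And>a b. a \<le> b \<Longrightarrow> b \<le> m \<Longrightarrow> d2 b \<le> d2 a" using RC_mono[OF R2] by blast
  have db2: "\<And>k. k \<le> m \<Longrightarrow> m2 \<le> d2 k \<and> d2 k \<le> NN" using RC_bounds[OF R2] by blast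
  have claim: "\<And>j. Suc (2*j) < m \<Longrightarrow> d1 (2*j) \<le> d2 (Suc (2*j))"
  proof -
    fix j show "Suc (2*j) < m \<Longrightarrow> d1 (2*j) \<le> d2 (Suc (2*j))"
    proof (induction j)
      case 0 then show ?case using d10 d21 m1 by simp
    next
      case (Suc j)
      have IH: "d1 (2*j) \<le> d2 (Suc (2*j))" using Suc by simp
      have k1: "Suc (Suc (2*j)) \<le> m" and k2: "Suc (Suc (Suc (2*j))) \<le> m" using Suc.prems by auto
      have J1: "J (d1 (Suc (Suc (2*j)))) (d1 (2*j))" using rl1[OF k1] .
      have b: "d1 (Suc (Suc (2*j))) \<le> d1 (2*j)" "d2 (Suc (2*j)) \<le> NN"
        using dmo1[of "2*j" "Suc (Suc (2*j))"] db2[of "Suc (2*j)"] k1 by auto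
      have JA: "J (d1 (Suc (Suc (2*j)))) (d2 (Suc (2*j)))" using mono[OF order_refl b(1) IH b(2) J1] by simp
      show ?case
      proof (rule ccontr)
        assume "\<not> d1 (2 * Suc j) \<le> d2 (Suc (2 * Suc j))"
        then have "d2 (Suc (Suc (Suc (2*j)))) < d1 (Suc (Suc (2*j)))" by simp
        then have "\<not> J (d1 (Suc (Suc (2*j)))) (d2 (Suc (2*j)))"
          using mx2[OF k2] IH b(1) by simp
        then show False using JA by simp
      qed
    qed
  qed
  have e1: "m - 1 = Suc (2*(h-1))" "m - 2 = 2*(h-1)" "Suc (Suc (m - 2)) = m" "Suc (m - 1) = m"
    using h h1 by auto
  have A: "d1 (m-2) \<le> d2 (m-1)" using claim[of "h-1"] e1 h h1 by simp
  have J1: "J 0 (d1 (m-2))" using rl1[of "m-2"] e1 d1m by simp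
  have bm: "d2 (m-1) \<le> NN" using db2[of "m-1"] by simp
  have JA: "J 0 (d2 (m-1))" using mono[OF order_refl _ A bm J1] by simp
  define D where "D = d2 (m-1)"
  define s where "s = Max {x. x \<le> D \<and> J x D}"
  have fin: "finite {x. x \<le> D \<and> J x D}" by simp
  have ne: "0 \<in> {x. x \<le> D \<and> J x D}" using JA D_def by simp
  have sin: "s \<in> {x. x \<le> D \<and> J x D}" unfolding s_def using Max_in[OF fin] ne by blast
  then have Js: "J s D" and sD: "s \<le> D" by auto
  have smax: "\<And>x. x \<le> D \<Longrightarrow> J x D \<Longrightarrow> x \<le> s" unfolding s_def using Max_ge[OF fin] by blast
  have nm2: "\<not> J m2 D" using st2[of "m-1"] e1 d2m D_def by simp
  have sm: "s < m2"
  proof (rule ccontr)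
    assume "\<not> s < m2"
    then have "m2 \<le> s" by simp
    moreover have "D \<le> NN" using bm D_def by simp
    ultimately have "J m2 D" using mono[OF _ sD order_refl _ Js] by simp
    then show False using nm2 by simp
  qed
  have m2N: "m2 \<le> NN" using db2[of m] d2m by simp
  have nse: "\<not> J s m2"
  proof
    assume "J s m2"
    then have "J 0 m2" using mono[OF _ _ order_refl m2N] sm by (meson le0 less_imp_le)
    then show False using nJ by simp
  qed
  define d' where "d' k = (if k \<le> m then d2 k else s)" for k :: nat
  have "RC J (Suc m) s NN d'" unfolding RC_def
  proof (intro conjI allI impI)
    show "d' 0 = NN" using d20 d'_def by simp
    show "d' (Suc m) = s" using d'_def by simp
    show "d' 1 = NN - 1" using d21 d'_def False by simp
    show "s < NN" using sm m2N by simp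
  next
    fix k assume k: "k < Suc m"
    show "\<not> J (d' (Suc k)) (d' k)"
    proof (cases "k < m")
      case True then show ?thesis using st2[OF True] d'_def by simp
    next
      case False then have "k = m" using k by simp
      then show ?thesis using nse d2m d'_def by simp
    qed
    show "d' (Suc k) \<le> d' k"
    proof (cases "k < m")
      case True then show ?thesis using dmo2[of k "Suc k"] d'_def by simp
    next
      case False then have "k = m" using k by simp
      then show ?thesis using sm d2m d'_def by simp
    qed
  next
    fix k assume k: "Suc (Suc k) \<le> Suc m"
    show "J (d' (Suc (Suc k))) (d' k)"
    proof (cases "Suc (Suc k) \<le> m")
      case True then show ?thesis using rl2[OF True] d'_def by simp
    next
      case False then have "k = m - 1" using k by simp
      then show ?thesis using Js d'_def False e1 D_def by simp
    qed
  next
    fix k x assume k: "Suc (Suc k) \<le> Suc m" and x: "d' (Suc (Suc k)) < x \<and> x \<le> d' k"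
    show "\<not> J x (d' k)"
    proof (cases "Suc (Suc k) \<le> m")
      case True then show ?thesis using mx2[OF True] x d'_def by simp
    next
      case False then have km: "k = m - 1" using k by simp
      then have "d' k = D" "d' (Suc (Suc k)) = s" using d'_def e1 D_def False by auto
      then show ?thesis using smax x by fastforce
    qed
  qed
  moreover have "\<forall>k\<le>m. d' k = d2 k" using d'_def by simp
  ultimately show ?thesis using sm by blast
qed


locale qm_wf = quiver_monomial +
  assumes tQ0: "\<forall>e\<in>Q1. t e \<in> Q0"
    and Rp: "\<forall>r\<in>R. is_path r \<and> 2 \<le> plen r"
begin

definition vtx where
  "vtx p j = (if j < length (fst p) then t (fst p ! j) else snd p)"

definition piece where
  "piece p i j = (take (j - i) (drop i (fst p)), vtx p j)"

lemma plen_piece[simp]: "j \<le> plen p \<Longrightarrow> plen (piece p i j) = j - i"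
  by (simp add: piece_def plen_def)

lemma fst_piece: "fst (piece p i j) = take (j - i) (drop i (fst p))"
  by (simp add: piece_def)

lemma psrc_piece[simp]: "psrc (piece p i j) = vtx p j"
  by (simp add: piece_def psrc_def)

lemma ptgt_piece[simp]: "i \<le> j \<Longrightarrow> j \<le> plen p \<Longrightarrow> ptgt (piece p i j) = vtx p i"
  by (auto simp: ptgt_def piece_def vtx_def plen_def hd_drop_conv_nth)

lemma vtx_piece: "i \<le> j \<Longrightarrow> j \<le> plen p \<Longrightarrow> x \<le> j - i \<Longrightarrow> vtx (piece p i j) x = vtx p (i+x)"
  by (auto simp: piece_def vtx_def plen_def)

lemma piece_piece: "i \<le> j \<Longrightarrow> j \<le> plen p \<Longrightarrow> x \<le> y \<Longrightarrow> y \<le> j - i \<Longrightarrow>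
   piece (piece p i j) x y = piece p (i+x) (i+y)"
proof -
  assume a: "i \<le> j" "j \<le> plen p" "x \<le> y" "y \<le> j - i"
  have "fst (piece (piece p i j) x y) = fst (piece p (i+x) (i+y))"
    using a by (simp only: fst_piece drop_take take_take drop_drop, simp add: min_def add.commute)
  moreover have "snd (piece (piece p i j) x y) = snd (piece p (i+x) (i+y))"
    using a by (simp add: piece_def[of _ _ y] piece_def[of p "i+x"] vtx_piece)
  ultimately show ?thesis by (simp add: prod_eq_iff)
qed

lemma piece_full[simp]: "piece p 0 (plen p) = p"
  by (simp add: piece_def vtx_def plen_def)

lemma pcomp_piece: "i \<le> j \<Longrightarrow> j \<le> k \<Longrightarrow> k \<le> plen p \<Longrightarrow> pcomp (piece p i j) (piece p j k) = piece p i k"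
proof -
  assume a: "i \<le> j" "j \<le> k" "k \<le> plen p"
  have "take (j - i) (drop i (fst p)) @ take (k - j) (drop j (fst p)) = take (k - i) (drop i (fst p))"
  proof -
    have "k - i = (j - i) + (k - j)" using a by simp
    moreover have "drop j (fst p) = drop (j - i) (drop i (fst p))" using a by simp
    ultimately show ?thesis by (simp only: take_add)
  qed
  then show ?thesis by (simp add: pcomp_def piece_def)
qed

lemma vtx0: "vtx p 0 = ptgt p"
  by (simp add: vtx_def ptgt_def hd_conv_nth)

lemma vtx_Q0: "is_path p \<Longrightarrow> vtx p j \<in> Q0"
proof -
  assume p: "is_path p"
  show ?thesis
  proof (cases "j < length (fst p)")
    case True
    then have "fst p ! j \<in> Q1" using p nth_mem by (fastforce simp: is_path_def)
    then show ?thesis using True tQ0 by (simp add: vtx_def)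
  qed (use p in \<open>simp add: vtx_def is_path_def\<close>)
qed

lemma is_path_piece: "is_path p \<Longrightarrow> i \<le> j \<Longrightarrow> j \<le> plen p \<Longrightarrow> is_path (piece p i j)"
proof -
  assume p: "is_path p" and ij: "i \<le> j" "j \<le> plen p"
  define W where "W = fst p"
  have L: "j \<le> length W" using ij by (simp add: W_def plen_def)
  have adj: "\<And>k. Suc k < length W \<Longrightarrow> s (W ! k) = t (W ! Suc k)"
    using p by (simp add: is_path_def W_def)
  have lst: "W \<noteq> [] \<Longrightarrow> s (last W) = snd p" using p by (simp add: is_path_def W_def)
  have setW: "set W \<subseteq> Q1" using p by (simp add: is_path_def W_def)
  have fp: "fst (piece p i j) = take (j - i) (drop i W)" by (simp add: fst_piece W_def)
  have nth: "\<And>k. k < j - i \<Longrightarrow> take (j - i) (drop i W) ! k = W ! (i + k)"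
    using L by simp
  have len: "length (take (j - i) (drop i W)) = j - i" using L by simp
  show ?thesis
    unfolding is_path_def
  proof (intro conjI impI allI)
    show "snd (piece p i j) \<in> Q0" using vtx_Q0[OF p] by (simp add: piece_def)
    show "set (fst (piece p i j)) \<subseteq> Q1" unfolding fp
      using setW by (meson order_trans set_drop_subset set_take_subset)
  next
    fix k assume "Suc k < length (fst (piece p i j))"
    then have k: "Suc k < j - i" using len fp by simp
    then show "s (fst (piece p i j) ! k) = t (fst (piece p i j) ! Suc k)"
      using nth[of k] nth[of "Suc k"] adj[of "i+k"] L fp by simp
  next
    assume ne: "fst (piece p i j) \<noteq> []"
    then have ij': "i < j" using fp len by (cases "i < j") auto
    have lastseg: "last (fst (piece p i j)) = W ! (j - 1)"
      using ne fp len nth[of "j - i - 1"] ij' by (simp add: last_conv_nth)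
    show "s (last (fst (piece p i j))) = snd (piece p i j)"
    proof (cases "j < length W")
      case True
      then show ?thesis using lastseg adj[of "j - 1"] ij'
        by (simp add: piece_def vtx_def W_def[symmetric])
    next
      case False
      then have "j = length W" using L by simp
      moreover have "W \<noteq> []" using ij' calculation by auto
      ultimately show ?thesis using lastseg lst ij' 
        by (auto simp: piece_def vtx_def W_def[symmetric] last_conv_nth)
    qed
  qed
qed

lemma split_piece: "pcomp x y = p \<Longrightarrow> ptgt y = psrc x \<Longrightarrow> x = piece p 0 (plen x) \<and> y = piece p (plen x) (plen p)"
proof -
  assume p: "pcomp x y = p" and c: "ptgt y = psrc x"
  have fp: "fst p = fst x @ fst y" "snd p = snd y" using p by (auto simp: pcomp_def)
  have "vtx p (plen x) = snd x"
  proof (cases "fst y = []")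
    case True
    then show ?thesis using c fp by (simp add: vtx_def plen_def ptgt_def psrc_def)
  next
    case False
    then show ?thesis using c fp by (simp add: vtx_def plen_def ptgt_def psrc_def nth_append hd_conv_nth)
  qed
  moreover have "vtx p (plen p) = snd y" using fp by (simp add: vtx_def plen_def)
  ultimately show ?thesis using fp by (simp add: piece_def plen_def prod_eq_iff)
qed

lemma ptgt_pcomp: "ptgt y = psrc q \<Longrightarrow> ptgt (pcomp q y) = ptgt q"
  by (auto simp: ptgt_def pcomp_def psrc_def)

lemma psrc_pcomp[simp]: "psrc (pcomp q y) = psrc y"
  by (simp add: pcomp_def psrc_def)

lemma plen_pcomp[simp]: "plen (pcomp q y) = plen q + plen y"
  by (simp add: pcomp_def plen_def)

lemma pcomp_assoc: "pcomp x (pcomp y z) = pcomp (pcomp x y) z"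
  by (simp add: pcomp_def)

lemma pcomp_path: "is_path x \<Longrightarrow> is_path y \<Longrightarrow> psrc x = ptgt y \<Longrightarrow> is_path (pcomp x y)"
proof -
  assume x: "is_path x" and y: "is_path y" and c: "psrc x = ptgt y"
  let ?X = "fst x" and ?Y = "fst y"
  have ax: "\<And>k. Suc k < length ?X \<Longrightarrow> s (?X ! k) = t (?X ! Suc k)" using x by (simp add: is_path_def)
  have ay: "\<And>k. Suc k < length ?Y \<Longrightarrow> s (?Y ! k) = t (?Y ! Suc k)" using y by (simp add: is_path_def)
  have lx: "?X \<noteq> [] \<Longrightarrow> s (last ?X) = snd x" using x by (simp add: is_path_def)
  have ly: "?Y \<noteq> [] \<Longrightarrow> s (last ?Y) = snd y" using y by (simp add: is_path_def)
  show ?thesis unfolding is_path_def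
  proof (intro conjI allI impI)
    show "snd (pcomp x y) \<in> Q0" using y by (simp add: is_path_def pcomp_def)
    show "set (fst (pcomp x y)) \<subseteq> Q1" using x y by (simp add: is_path_def pcomp_def)
  next
    fix k assume k: "Suc k < length (fst (pcomp x y))"
    then have k': "Suc k < length ?X + length ?Y" by (simp add: pcomp_def)
    consider "Suc k < length ?X" | "Suc k = length ?X" | "length ?X \<le> k" by linarith
    then show "s (fst (pcomp x y) ! k) = t (fst (pcomp x y) ! Suc k)"
    proof cases
      case 1 then show ?thesis using ax[of k] by (simp add: pcomp_def nth_append)
    next
      case 2
      then have "?X \<noteq> []" "?Y \<noteq> []" using k' by auto
      moreover have "k = length ?X - 1" using 2 by simp
      ultimately show ?thesis using 2 lx c by (simp add: pcomp_def nth_append last_conv_nth psrc_def ptgt_def hd_conv_nth)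
    next
      case 3
      then have "Suc (k - length ?X) < length ?Y" using k' by linarith
      then show ?thesis using ay[of "k - length ?X"] 3 by (simp add: pcomp_def nth_append Suc_diff_le)
    qed
  next
    assume ne: "fst (pcomp x y) \<noteq> []"
    show "s (last (fst (pcomp x y))) = snd (pcomp x y)"
    proof (cases "?Y = []")
      case True
      then have "?X \<noteq> []" using ne by (simp add: pcomp_def)
      then show ?thesis using True lx c by (simp add: pcomp_def psrc_def ptgt_def)
    next
      case False
      then show ?thesis using ly by (simp add: pcomp_def)
    qed
  qed
qed

lemma occ_iff: "is_path p \<Longrightarrow> occ p q x y \<longleftrightarrow>
   (\<exists>i j. i \<le> j \<and> j \<le> plen p \<and> x = piece p 0 i \<and> q = piece p i j \<and> y = piece p j (plen p))"
proof
  assume p: "is_path p" and o: "occ p q x y"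
  then have c1: "ptgt y = psrc q" and c2: "ptgt q = psrc x" and pe: "p = pcomp x (pcomp q y)"
    by (auto simp: occ_def)
  have "ptgt (pcomp q y) = psrc x" using ptgt_pcomp[OF c1] c2 by simp
  from split_piece[OF pe[symmetric] this] have
    xp: "x = piece p 0 (plen x)" and r: "pcomp q y = piece p (plen x) (plen p)" by auto
  from split_piece[OF refl c1] have
    "q = piece (pcomp q y) 0 (plen q)" "y = piece (pcomp q y) (plen q) (plen (pcomp q y))" by auto
  moreover have lp: "plen p = plen x + plen q + plen y" using pe by simp
  ultimately have "q = piece p (plen x) (plen x + plen q)" "y = piece p (plen x + plen q) (plen p)"
    using r piece_piece[of "plen x" "plen p" p 0 "plen q"] piece_piece[of "plen x" "plen p" p "plen q" "plen q + plen y"]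
    by (auto simp: add.assoc)
  then show "\<exists>i j. i \<le> j \<and> j \<le> plen p \<and> x = piece p 0 i \<and> q = piece p i j \<and> y = piece p j (plen p)"
    using xp lp by (intro exI[of _ "plen x"] exI[of _ "plen x + plen q"]) auto
next
  assume p: "is_path p" and "\<exists>i j. i \<le> j \<and> j \<le> plen p \<and> x = piece p 0 i \<and> q = piece p i j \<and> y = piece p j (plen p)"
  then obtain i j where ij: "i \<le> j" "j \<le> plen p" and e: "x = piece p 0 i" "q = piece p i j" "y = piece p j (plen p)"
    by blast
  have "p = pcomp x (pcomp q y)" using e ij pcomp_piece[of i j "plen p" p] pcomp_piece[of 0 i "plen p" p] by simp
  then show "occ p q x y" using e ij p by (auto simp: occ_def is_path_piece)
qed

end


context qm_wf begin

lemma inI_short: "plen X \<le> 1 \<Longrightarrow> \<not> inI X"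
proof
  assume l: "plen X \<le> 1" and "inI X"
  then obtain r x y where r: "r \<in> R" "occ X r x y" by (auto simp: inI_def)
  then have "plen X = plen x + plen r + plen y" by (auto simp: occ_def)
  moreover have "plen r \<ge> 2" using r Rp by auto
  ultimately show False using l by simp
qed

definition JP where "JP P i j = inI (piece P i j)"

lemma JP_short: "\<not> JP P i i" "\<not> JP P i (Suc i)"
  by (auto simp: JP_def intro!: inI_short simp: plen_def piece_def)

lemma inI_piece: "is_path P \<Longrightarrow> i \<le> j \<Longrightarrow> j \<le> plen P \<Longrightarrow>
  inI (piece P i j) \<longleftrightarrow> (\<exists>r\<in>R. \<exists>a b. i \<le> a \<and> a \<le> b \<and> b \<le> j \<and> r = piece P a b)"
proof -
  assume P: "is_path P" and ij: "i \<le> j" "j \<le> plen P"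
  have X: "is_path (piece P i j)" using is_path_piece[OF P ij] .
  have pl: "plen (piece P i j) = j - i" using ij by simp
  show ?thesis
  proof
    assume "inI (piece P i j)"
    then obtain r x y where r: "r \<in> R" "occ (piece P i j) r x y" by (auto simp: inI_def)
    then obtain a' b' where ab: "a' \<le> b'" "b' \<le> j - i" "r = piece (piece P i j) a' b'"
      using occ_iff[OF X] pl by metis
    then have "r = piece P (i+a') (i+b')" using piece_piece[OF ij] by simp
    moreover have "i \<le> i+a'" "i+a' \<le> i+b'" "i+b' \<le> j" using ab ij by auto
    ultimately show "\<exists>r\<in>R. \<exists>a b. i \<le> a \<and> a \<le> b \<and> b \<le> j \<and> r = piece P a b"
      using r(1) by blast
  next
    assume "\<exists>r\<in>R. \<exists>a b. i \<le> a \<and> a \<le> b \<and> b \<le> j \<and> r = piece P a b"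
    then obtain r a b where r: "r \<in> R" "i \<le> a" "a \<le> b" "b \<le> j" "r = piece P a b" by blast
    then have "r = piece (piece P i j) (a - i) (b - i)" using piece_piece[OF ij, of "a-i" "b-i"] by simp
    then have "occ (piece P i j) r (piece (piece P i j) 0 (a-i)) (piece (piece P i j) (b-i) (plen (piece P i j)))"
      apply (subst occ_iff[OF X])
      using r pl by (intro exI[of _ "a-i"] exI[of _ "b-i"]) auto
    then show "inI (piece P i j)" using r(1) unfolding inI_def by blast
  qed
qed

lemma JP_mono: "is_path P \<Longrightarrow> i' \<le> i \<Longrightarrow> i \<le> j \<Longrightarrow> j \<le> j' \<Longrightarrow> j' \<le> plen P \<Longrightarrow> JP P i j \<Longrightarrow> JP P i' j'"
  unfolding JP_def by (subst (asm) inI_piece, simp_all, subst inI_piece, simp_all) (meson order_trans)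

definition S where "S us k = sum_list (map plen (take k us))"

lemma S_0[simp]: "S us 0 = 0" by (simp add: S_def)

lemma S_Suc: "k < length us \<Longrightarrow> S us (Suc k) = S us k + plen (us ! k)"
  by (simp add: S_def take_Suc_conv_app_nth)

lemma S_mono: "a \<le> b \<Longrightarrow> S us a \<le> S us b"
proof -
  assume "a \<le> b"
  then have "take b us = take a us @ take (b - a) (drop a us)"
    by (metis le_add_diff_inverse take_add)
  then show ?thesis by (simp add: S_def)
qed

definition cc_ok where "cc_ok us \<longleftrightarrow> (\<forall>i. Suc i < length us \<longrightarrow> ptgt (us ! Suc i) = psrc (us ! i))"

lemma cc_ok_tl: "cc_ok (x # xs) \<Longrightarrow> cc_ok xs"
  by (auto simp: cc_ok_def)

lemma PT: "us \<noteq> [] \<Longrightarrow> cc_ok us \<Longrightarrow> ptgt (pcomp_list us) = ptgt (us ! 0)"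
proof (induction us rule: pcomp_list.induct)
  case (3 x v va)
  have c: "ptgt v = psrc x" using "3.prems" by (auto simp: cc_ok_def)
  have ih: "ptgt (pcomp_list (v # va)) = ptgt v" using 3 cc_ok_tl by auto
  show ?case using ptgt_pcomp[of "pcomp_list (v#va)" x] ih c by simp
qed auto

lemma plen_pcomp_list: "us \<noteq> [] \<Longrightarrow> plen (pcomp_list us) = S us (length us)"
  by (induction us rule: pcomp_list.induct) (auto simp: S_def)

lemma CH: "us \<noteq> [] \<Longrightarrow> cc_ok us \<Longrightarrow> k < length us \<Longrightarrow> us ! k = piece (pcomp_list us) (S us k) (S us (Suc k))"
proof (induction us arbitrary: k rule: pcomp_list.induct)
  case (2 x)
  then show ?case by (simp add: S_def)
next
  case (3 x v va)
  let ?p' = "pcomp_list (v # va)"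
  let ?p = "pcomp_list (x # v # va)"
  have pe: "?p = pcomp x ?p'" by simp
  have c0: "ptgt v = psrc x" using "3.prems"(2) unfolding cc_ok_def by (metis length_Cons less_Suc_eq_0_disj nth_Cons_0 nth_Cons_Suc zero_less_Suc)
  have c: "ptgt ?p' = psrc x" using PT[of "v#va"] "3.prems" cc_ok_tl c0 by auto
  from split_piece[OF pe[symmetric] c] have xp: "x = piece ?p 0 (plen x)" and
    p': "?p' = piece ?p (plen x) (plen ?p)" by auto
  have Sx: "\<And>j. S (x # v # va) (Suc j) = plen x + S (v # va) j" by (simp add: S_def)
  show ?case
  proof (cases k)
    case 0
    then show ?thesis using xp by (simp add: S_def)
  next
    case (Suc k')
    then have k': "k' < length (v # va)" using "3.prems" by simp
    have ih: "(v # va) ! k' = piece ?p' (S (v#va) k') (S (v#va) (Suc k'))"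
      using "3.IH" k' "3.prems" cc_ok_tl by blast
    have le: "S (v#va) (Suc k') \<le> plen ?p'"
      using plen_pcomp_list[of "v#va"] S_mono[of "Suc k'" "length (v#va)"] k' by simp
    have le2: "S (v#va) k' \<le> S (v#va) (Suc k')" by (rule S_mono) simp
    have "piece ?p' (S (v#va) k') (S (v#va) (Suc k')) = piece ?p (plen x + S (v#va) k') (plen x + S (v#va) (Suc k'))"
      using p' piece_piece[of "plen x" "plen ?p" ?p "S (v#va) k'" "S (v#va) (Suc k')"] le le2 pe by simp
    then show ?thesis using ih Suc Sx by simp
  qed
qed simp

lemma pcomp_list_snoc: "xs \<noteq> [] \<Longrightarrow> pcomp_list (xs @ [y]) = pcomp (pcomp_list xs) y"
proof (induction xs rule: pcomp_list.induct)
  case (2 x) then show ?case by simp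
next
  case (3 x v va) then show ?case by (simp add: pcomp_assoc)
qed simp

end


definition ccf :: "nat \<Rightarrow> (nat \<Rightarrow> nat) \<Rightarrow> nat \<Rightarrow> nat" where
  "ccf z c k = (case k of 0 \<Rightarrow> z | Suc k' \<Rightarrow> c k')"

lemma ccf_simps[simp]: "ccf z c 0 = z" "ccf z c (Suc k) = c k"
  by (simp_all add: ccf_def)

context qm_wf begin

definition ldec where "ldec P lo c m = map (\<lambda>k. piece P (ccf lo c k) (ccf lo c (Suc k))) [0..<Suc m]"
definition rdec where "rdec P hi d m = map (\<lambda>k. piece P (ccf hi d (Suc k)) (ccf hi d k)) [0..<Suc m]"

lemma JP_JMONO: "is_path P \<Longrightarrow> hi \<le> plen P \<Longrightarrow> JMONO (JP P) lo hi"
proof -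
  assume P: "is_path P" and h: "hi \<le> plen P"
  have "\<forall>i' i j j'. lo \<le> i' \<longrightarrow> i' \<le> i \<longrightarrow> i \<le> j \<longrightarrow> j \<le> j' \<longrightarrow> j' \<le> hi \<longrightarrow> JP P i j \<longrightarrow> JP P i' j'"
  proof (intro allI impI)
    fix i' i j j' assume a: "lo \<le> i'" "i' \<le> i" "i \<le> j" "j \<le> j'" "j' \<le> hi" "JP P i j"
    have "j' \<le> plen P" using a(5) h by simp
    then show "JP P i' j'" using JP_mono[OF P a(2,3,4) _ a(6)] by simp
  qed
  then show ?thesis unfolding JMONO_def using JP_short by blast
qed

lemma JP_lt: "JP P i j \<Longrightarrow> Suc i < j"
proof (rule ccontr)
  assume J: "JP P i j" and "\<not> Suc i < j"
  then have "plen (piece P i j) \<le> 1" by (simp add: plen_def piece_def)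
  then show False using inI_short J by (simp add: JP_def)
qed

lemma ldec_Suc: "ldec P lo c (Suc m) = ldec P lo c m @ [piece P (c m) (c (Suc m))]"
  by (simp add: ldec_def)

lemma rdec_Suc: "rdec P hi d (Suc m) = rdec P hi d m @ [piece P (d (Suc m)) (d m)]"
  by (simp add: rdec_def)

lemma ldec_concat: "c 0 = lo \<Longrightarrow> (\<forall>a b. a \<le> b \<longrightarrow> b \<le> m \<longrightarrow> c a \<le> c b) \<Longrightarrow> c m \<le> plen P \<Longrightarrow>
   pcomp_list (ldec P lo c m) = piece P lo (c m)"
proof (induction m)
  case 0 then show ?case by (simp add: ldec_def)
next
  case (Suc m)
  have "c m \<le> c (Suc m)" using Suc.prems(2) by simp
  then have "c m \<le> plen P" using Suc.prems(3) by linarith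
  then have IH: "pcomp_list (ldec P lo c m) = piece P lo (c m)"
    using Suc.IH Suc.prems by simp
  have a: "lo \<le> c m" "c m \<le> c (Suc m)" using Suc.prems by auto
  have ne: "ldec P lo c m \<noteq> []" by (simp add: ldec_def)
  show ?case using pcomp_list_snoc[OF ne] IH pcomp_piece[OF a Suc.prems(3)] ldec_Suc by simp
qed

lemma rdec_concat: "d 0 = hi \<Longrightarrow> (\<forall>a b. a \<le> b \<longrightarrow> b \<le> m \<longrightarrow> d b \<le> d a) \<Longrightarrow> hi \<le> plen P \<Longrightarrow>
   pcomp_list (rev (rdec P hi d m)) = piece P (d m) hi"
proof (induction m)
  case 0 then show ?case by (simp add: rdec_def)
next
  case (Suc m)
  have IH: "pcomp_list (rev (rdec P hi d m)) = piece P (d m) hi"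
    using Suc.IH Suc.prems by simp
  have a1: "d (Suc m) \<le> d m" using Suc.prems(2) by simp
  have a2: "d m \<le> d 0" using Suc.prems(2) by simp
  have a: "d (Suc m) \<le> d m" "d m \<le> hi" using a1 a2 Suc.prems(1) by auto
  have ne: "rev (rdec P hi d m) \<noteq> []" by (simp add: rdec_def)
  then obtain y ys where yys: "rev (rdec P hi d m) = y # ys" by (cases "rev (rdec P hi d m)") auto
  have "pcomp_list (rev (rdec P hi d (Suc m))) = pcomp (piece P (d (Suc m)) (d m)) (pcomp_list (rev (rdec P hi d m)))"
    using rdec_Suc yys by simp
  then show ?case using IH pcomp_piece[OF a Suc.prems(3)] by simp
qed

lemma triv_piece: "triv (ptgt X) = piece X 0 0"
  by (simp add: triv_def piece_def vtx0)

lemma triv_piece2: "triv (psrc X) = piece X (plen X) (plen X)"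
  by (simp add: triv_def piece_def psrc_def vtx_def plen_def)

lemma occ_pieces: "is_path X \<Longrightarrow> i \<le> j \<Longrightarrow> j \<le> plen X \<Longrightarrow> occ X (piece X i j) (piece X 0 i) (piece X j (plen X))"
  using occ_iff by blast

lemma suffix_piece: "is_path P \<Longrightarrow> i \<le> x \<Longrightarrow> x \<le> j \<Longrightarrow> j \<le> plen P \<Longrightarrow> is_suffix (piece P i x) (piece P i j)"
proof -
  assume P: "is_path P" and a: "i \<le> x" "x \<le> j" "j \<le> plen P"
  let ?X = "piece P i j"
  have X: "is_path ?X" using is_path_piece[OF P] a by simp
  have q: "piece P i x = piece ?X 0 (x - i)" using piece_piece[of i j P 0 "x - i"] a by simp
  have "occ ?X (piece P i x) (triv (ptgt ?X)) (piece ?X (x - i) (plen ?X))"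
    using occ_pieces[OF X, of 0 "x - i"] a q triv_piece[of ?X] by simp
  then show ?thesis unfolding is_suffix_def by blast
qed

lemma suffix_piece_inv: "is_path P \<Longrightarrow> i \<le> j \<Longrightarrow> j \<le> plen P \<Longrightarrow> is_suffix q (piece P i j) \<Longrightarrow>
   \<exists>x. i \<le> x \<and> x \<le> j \<and> q = piece P i x"
proof -
  assume P: "is_path P" and a: "i \<le> j" "j \<le> plen P" and s: "is_suffix q (piece P i j)"
  let ?X = "piece P i j"
  have X: "is_path ?X" using is_path_piece[OF P] a by simp
  obtain y where "occ ?X q (triv (ptgt ?X)) y" using s unfolding is_suffix_def by blast
  then obtain a' b' where ab: "a' \<le> b'" "b' \<le> plen ?X" "triv (ptgt ?X) = piece ?X 0 a'" "q = piece ?X a' b'"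
    using occ_iff[OF X] by blast
  have "plen (triv (ptgt ?X)) = 0" by (simp add: triv_def plen_def)
  moreover have "plen (piece ?X 0 a') = a'" using ab by simp
  ultimately have "a' = 0" using ab(3) by metis
  then have "q = piece P i (i + b')" using ab piece_piece[of i j P 0 b'] a by simp
  then show ?thesis using ab a by (intro exI[of _ "i+b'"]) auto
qed

lemma prefix_piece: "is_path P \<Longrightarrow> i \<le> x \<Longrightarrow> x \<le> j \<Longrightarrow> j \<le> plen P \<Longrightarrow> is_prefix (piece P x j) (piece P i j)"
proof -
  assume P: "is_path P" and a: "i \<le> x" "x \<le> j" "j \<le> plen P"
  let ?X = "piece P i j"
  have X: "is_path ?X" using is_path_piece[OF P] a by simp
  have pl: "plen ?X = j - i" using a by simp
  have q: "piece P x j = piece ?X (x - i) (j - i)" using piece_piece[of i j P "x - i" "j - i"] a by simp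
  have "occ ?X (piece P x j) (piece ?X 0 (x - i)) (triv (psrc ?X))"
    using occ_pieces[OF X, of "x - i" "j - i"] a q triv_piece2[of ?X] pl by simp
  then show ?thesis unfolding is_prefix_def by blast
qed

lemma prefix_piece_inv: "is_path P \<Longrightarrow> i \<le> j \<Longrightarrow> j \<le> plen P \<Longrightarrow> is_prefix q (piece P i j) \<Longrightarrow>
   \<exists>x. i \<le> x \<and> x \<le> j \<and> q = piece P x j"
proof -
  assume P: "is_path P" and a: "i \<le> j" "j \<le> plen P" and s: "is_prefix q (piece P i j)"
  let ?X = "piece P i j"
  have X: "is_path ?X" using is_path_piece[OF P] a by simp
  have pl: "plen ?X = j - i" using a by simp
  obtain z where "occ ?X q z (triv (psrc ?X))" using s unfolding is_prefix_def by blast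
  then obtain a' b' where ab: "a' \<le> b'" "b' \<le> plen ?X" "q = piece ?X a' b'" "triv (psrc ?X) = piece ?X b' (plen ?X)"
    using occ_iff[OF X] by blast
  have "plen (triv (psrc ?X)) = 0" by (simp add: triv_def plen_def)
  moreover have "plen (piece ?X b' (plen ?X)) = plen ?X - b'" by simp
  ultimately have "plen ?X - b' = 0" using ab(4) by metis
  then have "b' = plen ?X" using ab(2) by simp
  then have "q = piece P (i + a') j" using ab piece_piece[of i j P a' "j - i"] a pl by simp
  then show ?thesis using ab a pl by (intro exI[of _ "i+a'"]) auto
qed

lemma nat_n2: "-1 \<le> n \<Longrightarrow> nat (n + 2) = Suc (nat (n + 1))" by simp

lemma T1a:
  assumes P: "is_path P" and lh: "lo \<le> hi" "hi \<le> plen P"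
    and LD: "left_decomp n (piece P lo hi) us"
  shows "\<exists>c. LC (JP P) (nat (n+1)) lo hi c \<and> us = ldec P lo c (nat (n+1))"
proof -
  define m where "m = nat (n+1)"
  let ?p = "piece P lo hi"
  have n: "-1 \<le> n" using LD by (simp add: left_decomp_def)
  have len: "length us = Suc m" using LD n unfolding left_decomp_def m_def by simp
  have ch: "chain us" and pe: "?p = pcomp_list us" and u0: "fst (us!0) = []"
    and uB: "\<forall>u\<in>set us. inB u" using LD unfolding left_decomp_def by auto
  have u1: "0 < m \<Longrightarrow> plen (us!1) = 1" using LD unfolding left_decomp_def m_def by auto
  have pr: "\<And>j. 1 \<le> j \<Longrightarrow> j+1 < length us \<Longrightarrow> inI (pcomp (us!j) (us!(j+1)))"
    using LD unfolding left_decomp_def by blast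
  have ne: "us \<noteq> []" and cco: "cc_ok us" using ch by (auto simp: chain_def cc_ok_def)
  have CHk: "\<And>k. k < Suc m \<Longrightarrow> us!k = piece ?p (S us k) (S us (Suc k))"
    using CH[OF ne cco] pe len by simp
  have plp: "plen ?p = hi - lo" using lh by simp
  have Stot: "S us (Suc m) = hi - lo" using plen_pcomp_list[OF ne] pe len plp by simp
  have Sle: "\<And>k. k \<le> Suc m \<Longrightarrow> S us k \<le> hi - lo" using S_mono Stot by metis
  have pp: "\<And>a b. a \<le> b \<Longrightarrow> b \<le> hi - lo \<Longrightarrow> piece ?p a b = piece P (lo+a) (lo+b)"
    using piece_piece lh by simp
  define c where "c k = lo + S us (Suc k)" for k
  have ccl: "\<And>k. ccf lo c k = lo + S us k" by (case_tac k) (simp_all add: c_def)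
  have uk: "\<And>k. k < Suc m \<Longrightarrow> us!k = piece P (ccf lo c k) (ccf lo c (Suc k))"
  proof -
    fix k assume k: "k < Suc m"
    have "S us k \<le> S us (Suc k)" "S us (Suc k) \<le> hi - lo" using S_mono[of k "Suc k" us] Sle[of "Suc k"] k by auto
    then show "us!k = piece P (ccf lo c k) (ccf lo c (Suc k))" using CHk[OF k] pp ccl by (simp add: c_def)
  qed
  have ud: "us = ldec P lo c m"
    by (rule nth_equalityI) (auto simp: ldec_def len uk simp del: upt_Suc)
  have cle: "\<And>k. k \<le> m \<Longrightarrow> lo \<le> c k \<and> c k \<le> hi" using Sle lh unfolding c_def by fastforce
  have cmo: "\<And>k. c k \<le> c (Suc k)" unfolding c_def using S_mono[of "Suc _" "Suc (Suc _)" us] by simp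
  have ukk: "\<And>k. k < m \<Longrightarrow> us ! Suc k = piece P (c k) (c (Suc k))" using uk by simp
  have S1: "S us 1 = 0" using S_Suc[of 0 us] len u0 by (simp add: plen_def)
  have L1: "c 0 = lo" using S1 by (simp add: c_def)
  have L2: "c m = hi" using Stot lh by (simp add: c_def)
  have L3: "0 < m \<longrightarrow> c 1 = Suc lo"
  proof
    assume m: "0 < m"
    have "S us 2 = S us 1 + plen (us ! 1)" using S_Suc[of 1 us] len m by (simp add: numeral_2_eq_2)
    then show "c 1 = Suc lo" using S1 u1[OF m] by (simp add: c_def numeral_2_eq_2)
  qed
  have L4: "\<forall>k<m. \<not> JP P (c k) (c (Suc k)) \<and> c k \<le> c (Suc k)"
  proof (intro allI impI conjI)
    fix k assume k: "k < m"
    have "inB (us ! Suc k)" using uB len k by simp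
    then show "\<not> JP P (c k) (c (Suc k))" using ukk[OF k] by (simp add: inB_def JP_def)
  qed (rule cmo)
  have L5: "\<forall>k. Suc (Suc k) \<le> m \<longrightarrow> JP P (c k) (c (Suc (Suc k))) \<and> (\<forall>x. c k \<le> x \<and> x < c (Suc (Suc k)) \<longrightarrow> \<not> JP P (c k) x)"
  proof (intro allI impI conjI)
    fix k assume k: "Suc (Suc k) \<le> m"
    have b: "c k \<le> c (Suc k)" "c (Suc k) \<le> c (Suc (Suc k))" "c (Suc (Suc k)) \<le> plen P"
      using cmo cle[of "Suc (Suc k)"] k lh by auto
    have X: "pcomp (us ! Suc k) (us ! (Suc k + 1)) = piece P (c k) (c (Suc (Suc k)))"
      using ukk[of k] ukk[of "Suc k"] k pcomp_piece[OF b] by simp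
    have "inI (pcomp (us ! Suc k) (us ! (Suc k + 1)))" using pr[of "Suc k"] len k by simp
    then show "JP P (c k) (c (Suc (Suc k)))" using X by (simp add: JP_def)
  next
    fix k x assume k: "Suc (Suc k) \<le> m" and x: "c k \<le> x \<and> x < c (Suc (Suc k))"
    have b: "c k \<le> c (Suc k)" "c (Suc k) \<le> c (Suc (Suc k))" "c (Suc (Suc k)) \<le> plen P"
      using cmo cle[of "Suc (Suc k)"] k lh by auto
    have X: "pcomp (us ! Suc k) (us ! (Suc k + 1)) = piece P (c k) (c (Suc (Suc k)))"
      using ukk[of k] ukk[of "Suc k"] k pcomp_piece[OF b] by simp
    {
      have suf: "is_suffix (piece P (c k) x) (piece P (c k) (c (Suc (Suc k))))"
        using suffix_piece[OF P, of "c k" x "c (Suc (Suc k))"] x b by simp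
      have neq: "piece P (c k) x \<noteq> piece P (c k) (c (Suc (Suc k)))"
      proof
        assume "piece P (c k) x = piece P (c k) (c (Suc (Suc k)))"
        then have "plen (piece P (c k) x) = plen (piece P (c k) (c (Suc (Suc k))))" by simp
        then show False using x b by simp arith
      qed
      have "\<forall>q. is_suffix q (pcomp (us ! Suc k) (us ! (Suc k + 1))) \<and> q \<noteq> pcomp (us ! Suc k) (us ! (Suc k + 1)) \<longrightarrow> \<not> inI q"
        using LD len k unfolding left_decomp_def by (metis Suc_eq_plus1 Suc_le_lessD le_add2 less_Suc_eq_le one_add_one plus_1_eq_Suc)
      then show "\<not> JP P (c k) x" unfolding JP_def using suf neq X by metis
    }
  qed
  have "LC (JP P) m lo hi c" unfolding LC_def using L1 L2 L3 L4 L5 by blast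
  then show ?thesis using ud m_def by blast
qed

lemma T3a:
  assumes P: "is_path P" and lh: "lo \<le> hi" "hi \<le> plen P"
    and RD: "right_decomp n (piece P lo hi) vs"
  shows "\<exists>d. RC (JP P) (nat (n+1)) lo hi d \<and> vs = rdec P hi d (nat (n+1))"
proof -
  define m where "m = nat (n+1)"
  let ?p = "piece P lo hi"
  define rs where "rs = rev vs"
  have n: "-1 \<le> n" using RD by (simp add: right_decomp_def)
  have len: "length vs = Suc m" using RD n unfolding right_decomp_def m_def by simp
  have lenr: "length rs = Suc m" using len rs_def by simp
  have ch: "chain rs" and pe: "?p = pcomp_list rs" and u0: "fst (vs!0) = []"
    and uB: "\<forall>u\<in>set vs. inB u" using RD unfolding right_decomp_def rs_def by auto
  have u1: "0 < m \<Longrightarrow> plen (vs!1) = 1" using RD unfolding right_decomp_def m_def by auto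
  have pr: "\<And>j. 1 \<le> j \<Longrightarrow> j+1 < length vs \<Longrightarrow> inI (pcomp (vs!(j+1)) (vs!j))"
    using RD unfolding right_decomp_def by blast
  have ne: "rs \<noteq> []" and cco: "cc_ok rs" using ch by (auto simp: chain_def cc_ok_def)
  have CHk: "\<And>k. k < Suc m \<Longrightarrow> rs!k = piece ?p (S rs k) (S rs (Suc k))"
    using CH[OF ne cco] pe lenr by simp
  have vr: "\<And>k. k \<le> m \<Longrightarrow> vs ! k = rs ! (m - k)"
    using len unfolding rs_def by (simp add: rev_nth)
  have plp: "plen ?p = hi - lo" using lh by simp
  have Stot: "S rs (Suc m) = hi - lo" using plen_pcomp_list[OF ne] pe lenr plp by simp
  have Sle: "\<And>k. k \<le> Suc m \<Longrightarrow> S rs k \<le> hi - lo" using S_mono Stot by metis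
  have pp: "\<And>a b. a \<le> b \<Longrightarrow> b \<le> hi - lo \<Longrightarrow> piece ?p a b = piece P (lo+a) (lo+b)"
    using piece_piece lh by simp
  define d where "d k = lo + S rs (m - k)" for k
  have ccl: "\<And>k. k \<le> Suc m \<Longrightarrow> ccf hi d k = lo + S rs (Suc m - k)"
  proof -
    fix k assume k: "k \<le> Suc m"
    show "ccf hi d k = lo + S rs (Suc m - k)"
    proof (cases k)
      case 0 then show ?thesis using Stot lh by simp
    next
      case (Suc k') then show ?thesis by (simp add: d_def)
    qed
  qed
  have uk: "\<And>k. k < Suc m \<Longrightarrow> vs!k = piece P (ccf hi d (Suc k)) (ccf hi d k)"
  proof -
    fix k assume k: "k < Suc m"
    have e: "Suc (m - k) = Suc m - k" using k by simp
    have "S rs (m - k) \<le> S rs (Suc (m - k))" "S rs (Suc (m - k)) \<le> hi - lo"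
      using S_mono[of "m - k" "Suc (m - k)" rs] Sle[of "Suc (m - k)"] k by auto
    then have "vs!k = piece P (lo + S rs (m - k)) (lo + S rs (Suc m - k))"
      using vr[of k] CHk[of "m - k"] pp k e by simp
    then show "vs!k = piece P (ccf hi d (Suc k)) (ccf hi d k)" using ccl[of k] k by (simp add: d_def)
  qed
  have vd: "vs = rdec P hi d m"
    by (rule nth_equalityI) (auto simp: rdec_def len uk simp del: upt_Suc)
  have dle: "\<And>k. lo \<le> d k \<and> d k \<le> hi"
  proof -
    fix k have "S rs (m - k) \<le> hi - lo" using Sle[of "m - k"] by simp
    then show "lo \<le> d k \<and> d k \<le> hi" using lh unfolding d_def by simp
  qed
  have dmo: "\<And>k. d (Suc k) \<le> d k" unfolding d_def using S_mono[of "m - Suc _" "m - _" rs] by simp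
  have ukk: "\<And>k. k < m \<Longrightarrow> vs ! Suc k = piece P (d (Suc k)) (d k)" using uk by simp
  have Sm: "S rs m = hi - lo" using S_Suc[of m rs] lenr Stot vr[of 0] u0 by (simp add: plen_def)
  have R1: "d 0 = hi" using Sm lh by (simp add: d_def)
  have R2: "d m = lo" by (simp add: d_def)
  have R3: "0 < m \<longrightarrow> d 1 = hi - 1 \<and> lo < hi"
  proof
    assume m: "0 < m"
    have "S rs (Suc (m - 1)) = S rs (m - 1) + plen (rs ! (m - 1))" using S_Suc[of "m - 1" rs] lenr by simp
    moreover have "rs ! (m - 1) = vs ! 1" using vr[of 1] m by simp
    ultimately have "S rs m = S rs (m - 1) + 1" using u1[OF m] m by simp
    then show "d 1 = hi - 1 \<and> lo < hi" using Sm lh by (simp add: d_def) arith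
  qed
  have R4: "\<forall>k<m. \<not> JP P (d (Suc k)) (d k) \<and> d (Suc k) \<le> d k"
  proof (intro allI impI conjI)
    fix k assume k: "k < m"
    have "inB (vs ! Suc k)" using uB len k by simp
    then show "\<not> JP P (d (Suc k)) (d k)" using ukk[OF k] by (simp add: inB_def JP_def)
  qed (rule dmo)
  have R5: "\<forall>k. Suc (Suc k) \<le> m \<longrightarrow> JP P (d (Suc (Suc k))) (d k) \<and> (\<forall>x. d (Suc (Suc k)) < x \<and> x \<le> d k \<longrightarrow> \<not> JP P x (d k))"
  proof (intro allI impI conjI)
    fix k assume k: "Suc (Suc k) \<le> m"
    have b: "d (Suc (Suc k)) \<le> d (Suc k)" "d (Suc k) \<le> d k" "d k \<le> plen P"
      using dmo dle[of k] lh by auto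
    have X: "pcomp (vs ! (Suc k + 1)) (vs ! Suc k) = piece P (d (Suc (Suc k))) (d k)"
      using ukk[of k] ukk[of "Suc k"] k pcomp_piece[OF b] by simp
    have "inI (pcomp (vs ! (Suc k + 1)) (vs ! Suc k))" using pr[of "Suc k"] len k by simp
    then show "JP P (d (Suc (Suc k))) (d k)" using X by (simp add: JP_def)
  next
    fix k x assume k: "Suc (Suc k) \<le> m" and x: "d (Suc (Suc k)) < x \<and> x \<le> d k"
    have b: "d (Suc (Suc k)) \<le> d (Suc k)" "d (Suc k) \<le> d k" "d k \<le> plen P"
      using dmo dle[of k] lh by auto
    have X: "pcomp (vs ! (Suc k + 1)) (vs ! Suc k) = piece P (d (Suc (Suc k))) (d k)"
      using ukk[of k] ukk[of "Suc k"] k pcomp_piece[OF b] by simp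
    have pre: "is_prefix (piece P x (d k)) (piece P (d (Suc (Suc k))) (d k))"
      using prefix_piece[OF P, of "d (Suc (Suc k))" x "d k"] x b by simp
    have neq: "piece P x (d k) \<noteq> piece P (d (Suc (Suc k))) (d k)"
    proof
      assume "piece P x (d k) = piece P (d (Suc (Suc k))) (d k)"
      then have "plen (piece P x (d k)) = plen (piece P (d (Suc (Suc k))) (d k))" by simp
      then show False using x b by simp arith
    qed
    have "\<forall>q. is_prefix q (pcomp (vs ! (Suc k + 1)) (vs ! Suc k)) \<and> q \<noteq> pcomp (vs ! (Suc k + 1)) (vs ! Suc k) \<longrightarrow> \<not> inI q"
      using RD len k unfolding right_decomp_def by (metis Suc_eq_plus1 Suc_le_lessD le_add2 less_Suc_eq_le one_add_one plus_1_eq_Suc)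
    then show "\<not> JP P x (d k)" unfolding JP_def using pre neq X by metis
  qed
  have "RC (JP P) m lo hi d" unfolding RC_def using R1 R2 R3 R4 R5 by blast
  then show ?thesis using vd m_def by blast
qed

lemma ldec_nth: "k < Suc m \<Longrightarrow> ldec P lo c m ! k = piece P (ccf lo c k) (ccf lo c (Suc k))"
  by (simp add: ldec_def del: upt_Suc)

lemma rdec_nth: "k < Suc m \<Longrightarrow> rdec P hi d m ! k = piece P (ccf hi d (Suc k)) (ccf hi d k)"
  by (simp add: rdec_def del: upt_Suc)

lemma T2a:
  assumes P: "is_path P" and lh: "lo \<le> hi" "hi \<le> plen P" and n: "-1 \<le> n"
    and L: "LC (JP P) (nat (n+1)) lo hi c"
  shows "left_decomp n (piece P lo hi) (ldec P lo c (nat (n+1)))"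
proof -
  define m where "m = nat (n+1)"
  define us where "us = ldec P lo c m"
  have Lm: "LC (JP P) m lo hi c" using L m_def by simp
  have c0: "c 0 = lo" and cm: "c m = hi" and c1: "0 < m \<Longrightarrow> c 1 = Suc lo"
    and st: "\<And>k. k < m \<Longrightarrow> \<not> JP P (c k) (c (Suc k))"
    and rl: "\<And>k. Suc (Suc k) \<le> m \<Longrightarrow> JP P (c k) (c (Suc (Suc k)))"
    and mn: "\<And>k x. Suc (Suc k) \<le> m \<Longrightarrow> c k \<le> x \<Longrightarrow> x < c (Suc (Suc k)) \<Longrightarrow> \<not> JP P (c k) x"
    using Lm unfolding LC_def by auto
  have cmo: "\<And>a b. a \<le> b \<Longrightarrow> b \<le> m \<Longrightarrow> c a \<le> c b" using LC_mono[OF Lm] by blast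
  have cb: "\<And>k. k \<le> m \<Longrightarrow> lo \<le> c k \<and> c k \<le> hi" using LC_bounds[OF Lm] by blast
  have len: "length us = Suc m" by (simp add: us_def ldec_def)
  have un: "\<And>k. k < Suc m \<Longrightarrow> us ! k = piece P (ccf lo c k) (ccf lo c (Suc k))"
    unfolding us_def by (rule ldec_nth)
  have ccb: "\<And>k. k < Suc m \<Longrightarrow> ccf lo c k \<le> ccf lo c (Suc k) \<and> ccf lo c (Suc k) \<le> plen P"
  proof -
    fix k assume k: "k < Suc m"
    show "ccf lo c k \<le> ccf lo c (Suc k) \<and> ccf lo c (Suc k) \<le> plen P"
    proof (cases k)
      case 0 then show ?thesis using c0 lh by simp
    next
      case (Suc k') then show ?thesis using cmo[of k' "Suc k'"] cb[of "Suc k'"] k lh by simp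
    qed
  qed
  have paths: "\<And>k. k < Suc m \<Longrightarrow> is_path (us ! k)" using un ccb is_path_piece[OF P] by simp
  have chain: "chain us" unfolding chain_def
  proof (intro conjI allI impI ballI)
    show "us \<noteq> []" using len by auto
  next
    fix u assume "u \<in> set us" then show "is_path u" using paths len by (metis in_set_conv_nth)
  next
    fix i assume i: "Suc i < length us"
    have "ccf lo c i \<le> ccf lo c (Suc i)" using ccb[of i] i len by simp
    then show "ptgt (us ! Suc i) = psrc (us ! i)" using un[of i] un[of "Suc i"] i len ccb[of "Suc i"] by simp
  qed
  have conc: "piece P lo hi = pcomp_list us"
    using ldec_concat[of c lo m P] c0 cmo cm lh unfolding us_def by simp
  have u0: "fst (us ! 0) = []" using un[of 0] c0 by (simp add: piece_def)
  have u0': "snd (us ! 0) \<in> Q0" using un[of 0] vtx_Q0[OF P] by (simp add: piece_def)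
  have u1: "0 \<le> n \<longrightarrow> plen (us ! 1) = 1"
  proof
    assume "0 \<le> n" then have m: "0 < m" using m_def by simp
    then show "plen (us ! 1) = 1" using un[of 1] c0 c1 cb[of 1] lh by simp
  qed
  have uB: "\<forall>u\<in>set us. inB u"
  proof
    fix u assume "u \<in> set us"
    then obtain k where k: "k < Suc m" "u = us ! k" using len by (metis in_set_conv_nth)
    have "\<not> JP P (ccf lo c k) (ccf lo c (Suc k))"
    proof (cases k)
      case 0 then show ?thesis using c0 JP_short by simp
    next
      case (Suc k') then show ?thesis using st[of k'] k by simp
    qed
    then show "inB u" using k paths un by (simp add: inB_def JP_def)
  qed
  have pairs: "\<forall>j. 1 \<le> j \<and> j + 1 < length us \<longrightarrow>
           inI (pcomp (us ! j) (us ! (j+1)))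
         \<and> (\<forall>q. is_suffix q (pcomp (us ! j) (us ! (j+1))) \<and> q \<noteq> pcomp (us ! j) (us ! (j+1))
                \<longrightarrow> \<not> inI q)"
  proof (intro allI impI)
    fix j assume j: "1 \<le> j \<and> j + 1 < length us"
    then obtain k where k: "j = Suc k" "Suc (Suc k) \<le> m" using len by (cases j) auto
    have b: "c k \<le> c (Suc k)" "c (Suc k) \<le> c (Suc (Suc k))" "c (Suc (Suc k)) \<le> plen P"
      using cmo[of k "Suc k"] cmo[of "Suc k" "Suc (Suc k)"] cb[of "Suc (Suc k)"] k lh by auto
    have X: "pcomp (us ! j) (us ! (j+1)) = piece P (c k) (c (Suc (Suc k)))"
      using un[of j] un[of "j+1"] k pcomp_piece[OF b] by simp
    have b2: "c k \<le> c (Suc (Suc k))" using b by simp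
    show "inI (pcomp (us ! j) (us ! (j+1)))
         \<and> (\<forall>q. is_suffix q (pcomp (us ! j) (us ! (j+1))) \<and> q \<noteq> pcomp (us ! j) (us ! (j+1))
                \<longrightarrow> \<not> inI q)"
    proof (intro conjI allI impI)
      show "inI (pcomp (us ! j) (us ! (j+1)))" using X rl[OF k(2)] by (simp add: JP_def)
    next
      fix q assume q: "is_suffix q (pcomp (us ! j) (us ! (j+1))) \<and> q \<noteq> pcomp (us ! j) (us ! (j+1))"
      then obtain x where x: "c k \<le> x" "x \<le> c (Suc (Suc k))" "q = piece P (c k) x"
        using suffix_piece_inv[OF P b2 b(3)] X by metis
      have "x \<noteq> c (Suc (Suc k))" using q x X by auto
      then have "\<not> JP P (c k) x" using mn[OF k(2) x(1)] x(2) by simp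
      then show "\<not> inI q" using x by (simp add: JP_def)
    qed
  qed
  have "left_decomp n (piece P lo hi) us"
    unfolding left_decomp_def using n len chain conc u0 u0' u1 uB pairs m_def by auto
  then show ?thesis using us_def m_def by simp
qed

lemma T4a:
  assumes P: "is_path P" and lh: "lo \<le> hi" "hi \<le> plen P" and n: "-1 \<le> n"
    and R: "RC (JP P) (nat (n+1)) lo hi d"
  shows "right_decomp n (piece P lo hi) (rdec P hi d (nat (n+1)))"
proof -
  define m where "m = nat (n+1)"
  define vs where "vs = rdec P hi d m"
  have Rm: "RC (JP P) m lo hi d" using R m_def by simp
  have d0: "d 0 = hi" and dm: "d m = lo" and d1: "0 < m \<Longrightarrow> d 1 = hi - 1 \<and> lo < hi"
    and st: "\<And>k. k < m \<Longrightarrow> \<not> JP P (d (Suc k)) (d k)"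
    and rl: "\<And>k. Suc (Suc k) \<le> m \<Longrightarrow> JP P (d (Suc (Suc k))) (d k)"
    and mx: "\<And>k x. Suc (Suc k) \<le> m \<Longrightarrow> d (Suc (Suc k)) < x \<Longrightarrow> x \<le> d k \<Longrightarrow> \<not> JP P x (d k)"
    using Rm unfolding RC_def by auto
  have dmo: "\<And>a b. a \<le> b \<Longrightarrow> b \<le> m \<Longrightarrow> d b \<le> d a" using RC_mono[OF Rm] by blast
  have db: "\<And>k. k \<le> m \<Longrightarrow> lo \<le> d k \<and> d k \<le> hi" using RC_bounds[OF Rm] by blast
  have len: "length vs = Suc m" by (simp add: vs_def rdec_def)
  have un: "\<And>k. k < Suc m \<Longrightarrow> vs ! k = piece P (ccf hi d (Suc k)) (ccf hi d k)"
    unfolding vs_def by (rule rdec_nth)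
  have ccb: "\<And>k. k < Suc m \<Longrightarrow> ccf hi d (Suc k) \<le> ccf hi d k \<and> ccf hi d k \<le> plen P"
  proof -
    fix k assume k: "k < Suc m"
    show "ccf hi d (Suc k) \<le> ccf hi d k \<and> ccf hi d k \<le> plen P"
    proof (cases k)
      case 0 then show ?thesis using d0 lh by simp
    next
      case (Suc k') then show ?thesis using dmo[of k' "Suc k'"] db[of k'] k lh by simp
    qed
  qed
  have paths: "\<And>k. k < Suc m \<Longrightarrow> is_path (vs ! k)" using un ccb is_path_piece[OF P] by simp
  have revn: "\<And>i. i < Suc m \<Longrightarrow> rev vs ! i = vs ! (m - i)" using len by (simp add: rev_nth)
  have chain: "chain (rev vs)" unfolding chain_def
  proof (intro conjI allI impI ballI)
    show "rev vs \<noteq> []" using len by auto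
  next
    fix u assume "u \<in> set (rev vs)" then show "is_path u" using paths len by (metis in_set_conv_nth set_rev)
  next
    fix i assume i: "Suc i < length (rev vs)"
    define k where "k = m - Suc i"
    have e: "m - i = Suc k" using i len k_def by simp
    have "ccf hi d (Suc (Suc k)) \<le> ccf hi d (Suc k)" using ccb[of "Suc k"] e i len by simp
    then show "ptgt (rev vs ! Suc i) = psrc (rev vs ! i)"
      using revn[of i] revn[of "Suc i"] un[of k] un[of "Suc k"] i len ccb[of k] e k_def by simp
  qed
  have conc: "piece P lo hi = pcomp_list (rev vs)"
    using rdec_concat[of d hi m P] d0 dmo dm lh unfolding vs_def by simp
  have u0: "fst (vs ! 0) = []" using un[of 0] d0 by (simp add: piece_def)
  have u0': "snd (vs ! 0) \<in> Q0" using un[of 0] vtx_Q0[OF P] by (simp add: piece_def)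
  have u1: "0 \<le> n \<longrightarrow> plen (vs ! 1) = 1"
  proof
    assume "0 \<le> n" then have m: "0 < m" using m_def by simp
    then show "plen (vs ! 1) = 1" using un[of 1] d0 d1 lh by simp
  qed
  have uB: "\<forall>u\<in>set vs. inB u"
  proof
    fix u assume "u \<in> set vs"
    then obtain k where k: "k < Suc m" "u = vs ! k" using len by (metis in_set_conv_nth)
    have "\<not> JP P (ccf hi d (Suc k)) (ccf hi d k)"
    proof (cases k)
      case 0 then show ?thesis using d0 JP_short by simp
    next
      case (Suc k') then show ?thesis using st[of k'] k by simp
    qed
    then show "inB u" using k paths un by (simp add: inB_def JP_def)
  qed
  have pairs: "\<forall>j. 1 \<le> j \<and> j + 1 < length vs \<longrightarrow>
           inI (pcomp (vs ! (j+1)) (vs ! j))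
         \<and> (\<forall>q. is_prefix q (pcomp (vs ! (j+1)) (vs ! j)) \<and> q \<noteq> pcomp (vs ! (j+1)) (vs ! j)
                \<longrightarrow> \<not> inI q)"
  proof (intro allI impI)
    fix j assume j: "1 \<le> j \<and> j + 1 < length vs"
    then obtain k where k: "j = Suc k" "Suc (Suc k) \<le> m" using len by (cases j) auto
    have b: "d (Suc (Suc k)) \<le> d (Suc k)" "d (Suc k) \<le> d k" "d k \<le> plen P"
      using dmo[of k "Suc k"] dmo[of "Suc k" "Suc (Suc k)"] db[of k] k lh by auto
    have X: "pcomp (vs ! (j+1)) (vs ! j) = piece P (d (Suc (Suc k))) (d k)"
      using un[of j] un[of "j+1"] k pcomp_piece[OF b] by simp
    have b2: "d (Suc (Suc k)) \<le> d k" using b by simp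
    show "inI (pcomp (vs ! (j+1)) (vs ! j))
         \<and> (\<forall>q. is_prefix q (pcomp (vs ! (j+1)) (vs ! j)) \<and> q \<noteq> pcomp (vs ! (j+1)) (vs ! j)
                \<longrightarrow> \<not> inI q)"
    proof (intro conjI allI impI)
      show "inI (pcomp (vs ! (j+1)) (vs ! j))" using X rl[OF k(2)] by (simp add: JP_def)
    next
      fix q assume q: "is_prefix q (pcomp (vs ! (j+1)) (vs ! j)) \<and> q \<noteq> pcomp (vs ! (j+1)) (vs ! j)"
      then obtain x where x: "d (Suc (Suc k)) \<le> x" "x \<le> d k" "q = piece P x (d k)"
        using prefix_piece_inv[OF P b2 b(3)] X by metis
      have "x \<noteq> d (Suc (Suc k))" using q x X by auto
      then have "\<not> JP P x (d k)" using mx[OF k(2) _ x(2)] x(1) by simp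
      then show "\<not> inI q" using x by (simp add: JP_def)
    qed
  qed
  have "right_decomp n (piece P lo hi) vs"
    unfolding right_decomp_def using n len chain conc u0 u0' u1 uB pairs m_def by auto
  then show ?thesis using vs_def m_def by simp
qed

end


context qm_wf begin

lemma chain_path: "us \<noteq> [] \<Longrightarrow> (\<forall>u\<in>set us. is_path u) \<Longrightarrow> cc_ok us \<Longrightarrow> is_path (pcomp_list us)"
proof (induction us rule: pcomp_list.induct)
  case (3 x v va)
  have c0: "ptgt v = psrc x" using "3.prems"(3) unfolding cc_ok_def by (metis length_Cons less_Suc_eq_0_disj nth_Cons_0 nth_Cons_Suc zero_less_Suc)
  have ih: "is_path (pcomp_list (v # va))" using 3 cc_ok_tl by auto
  have "ptgt (pcomp_list (v # va)) = psrc x" using PT[of "v#va"] "3.prems" cc_ok_tl c0 by auto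
  then show ?case using pcomp_path[OF _ ih] "3.prems" by simp
qed auto

lemma left_path: "left_decomp n p us \<Longrightarrow> is_path p"
  unfolding left_decomp_def chain_def using chain_path by (auto simp: cc_ok_def)

lemma ldec_cong: "(\<forall>k\<le>m. c k = c' k) \<Longrightarrow> ldec P lo c m = ldec P lo c' m"
proof -
  assume h: "\<forall>k\<le>m. c k = c' k"
  then show ?thesis unfolding ldec_def by (intro map_cong) (auto simp: ccf_def split: nat.splits)
qed

lemma rdec_cong: "(\<forall>k\<le>m. d k = d' k) \<Longrightarrow> rdec P hi d m = rdec P hi d' m"
proof -
  assume h: "\<forall>k\<le>m. d k = d' k"
  then show ?thesis unfolding rdec_def by (intro map_cong) (auto simp: ccf_def split: nat.splits)
qed

lemma left_THE: "is_path P \<Longrightarrow> lo \<le> hi \<Longrightarrow> hi \<le> plen P \<Longrightarrow> -1 \<le> n \<Longrightarrow> LC (JP P) (nat (n+1)) lo hi c \<Longrightarrow>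
  (THE us. left_decomp n (piece P lo hi) us) = ldec P lo c (nat (n+1))"
proof (rule the_equality)
  assume a: "is_path P" "lo \<le> hi" "hi \<le> plen P" "-1 \<le> n" "LC (JP P) (nat (n+1)) lo hi c"
  show "left_decomp n (piece P lo hi) (ldec P lo c (nat (n + 1)))" using T2a a by blast
  fix us assume "left_decomp n (piece P lo hi) us"
  then obtain c' where c': "LC (JP P) (nat (n+1)) lo hi c'" "us = ldec P lo c' (nat (n+1))"
    using T1a a by blast
  have "\<forall>k\<le>nat (n+1). c' k = c k" using LC_uniq c'(1) a(5) by blast
  then show "us = ldec P lo c (nat (n+1))" using c'(2) ldec_cong by metis
qed

lemma right_THE: "is_path P \<Longrightarrow> lo \<le> hi \<Longrightarrow> hi \<le> plen P \<Longrightarrow> -1 \<le> n \<Longrightarrow> RC (JP P) (nat (n+1)) lo hi d \<Longrightarrow>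
  (THE vs. right_decomp n (piece P lo hi) vs) = rdec P hi d (nat (n+1))"
proof (rule the_equality)
  assume a: "is_path P" "lo \<le> hi" "hi \<le> plen P" "-1 \<le> n" "RC (JP P) (nat (n+1)) lo hi d"
  show "right_decomp n (piece P lo hi) (rdec P hi d (nat (n + 1)))" using T4a a by blast
  fix vs assume "right_decomp n (piece P lo hi) vs"
  then obtain d' where d': "RC (JP P) (nat (n+1)) lo hi d'" "vs = rdec P hi d' (nat (n+1))"
    using T3a a by blast
  have "\<forall>k\<le>nat (n+1). d' k = d k" using RC_uniq d'(1) a(5) by blast
  then show "vs = rdec P hi d (nat (n+1))" using d'(2) rdec_cong by metis
qed

lemma take_ldec: "take (Suc m) (ldec P lo c (Suc m)) = ldec P lo c m"
  by (simp add: ldec_Suc ldec_def)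

lemma take_rdec: "take (Suc m) (rdec P hi d (Suc m)) = rdec P hi d m"
  by (simp add: rdec_Suc rdec_def)

lemma Gamma_piece: "is_path P \<Longrightarrow> lo \<le> hi \<Longrightarrow> hi \<le> plen P \<Longrightarrow> piece P lo hi \<in> Gamma n \<Longrightarrow>
  (\<exists>c. LC (JP P) (nat (n+1)) lo hi c) \<and> (\<exists>d. RC (JP P) (nat (n+1)) lo hi d)"
  unfolding Gamma_def left_amb_def right_amb_def using T1a T3a by blast

end
theorem mainTheorem3:
  fixes Q0 :: "'v set" and Q1 :: "'e set" and s t :: "'e \<Rightarrow> 'v"
    and R :: "('v,'e) qpath set"
    and n :: int and q1 q2 a b w :: "('v,'e) qpath"
  assumes fm: "finite_monomial Q0 Q1 s t R"
    and n: "n \<ge> -1" "odd n"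
    and q1: "q1 \<in> quiver_monomial.Gamma Q0 Q1 s t R n"
    and q2: "q2 \<in> quiver_monomial.Gamma Q0 Q1 s t R n"
    and a: "quiver_monomial.is_path Q0 Q1 s t a" "plen a > 0"
    and b: "quiver_monomial.is_path Q0 Q1 s t b" "plen b > 0"
    and comp1: "quiver_monomial.ptgt t a = psrc q1"
    and comp2: "quiver_monomial.ptgt t q2 = psrc b"
    and w1: "w = pcomp q1 a"
    and w2: "w = pcomp b q2"
    and aB: "\<not> quiver_monomial.inI Q0 Q1 s t R a"
    and bB: "\<not> quiver_monomial.inI Q0 Q1 s t R b"
  shows "(\<exists>p1 x1 y1 x c.
            p1 \<in> quiver_monomial.Gamma Q0 Q1 s t R (n + 1)
          \<and> quiver_monomial.occ Q0 Q1 s t w p1 x1 y1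
          \<and> quiver_monomial.occ Q0 Q1 s t p1 (quiver_monomial.sigma Q0 Q1 s t R (n + 1) n p1) x c
          \<and> quiver_monomial.sigma Q0 Q1 s t R (n + 1) n p1 = q1
          \<and> pcomp x1 x = triv (quiver_monomial.ptgt t w)
          \<and> pcomp c y1 = a)
       \<and> (\<exists>p2 x2 y2 x c.
            p2 \<in> quiver_monomial.Gamma Q0 Q1 s t R (n + 1)
          \<and> quiver_monomial.occ Q0 Q1 s t w p2 x2 y2
          \<and> quiver_monomial.occ Q0 Q1 s t p2 (quiver_monomial.pi Q0 Q1 s t R (n + 1) n p2) x c
          \<and> quiver_monomial.pi Q0 Q1 s t R (n + 1) n p2 = q2
          \<and> pcomp x2 x = b
          \<and> pcomp c y2 = triv (psrc w))"
proof -
  interpret qm_wf Q0 Q1 s t R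
    using fm by unfold_locales (auto simp: finite_monomial_def)
  define m where "m = nat (n+1)"
  have n2: "nat (n + 1 + 1) = Suc m" "nat (n + 2) = Suc m" using n m_def by auto
  have ev: "even m" using n unfolding m_def by (simp add: even_nat_iff)
  have pq2: "is_path q2" using q2 left_path unfolding Gamma_def left_amb_def by blast
  have pq1: "is_path q1" using q1 left_path unfolding Gamma_def left_amb_def by blast
  have pw: "is_path w" using pcomp_path[OF b(1) pq2] comp2 w2 by simp
  define NN where "NN = plen w"
  define m1 where "m1 = plen q1"
  define m2 where "m2 = plen b"
  have sp1: "q1 = piece w 0 m1" "a = piece w m1 NN"
    using split_piece[OF w1[symmetric] comp1] m1_def NN_def by auto
  have sp2: "b = piece w 0 m2" "q2 = piece w m2 NN"
    using split_piece[OF w2[symmetric] comp2] m2_def NN_def by auto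
  have lens: "NN = m1 + plen a" "NN = m2 + plen q2"
    using arg_cong[OF w1, of plen] arg_cong[OF w2, of plen] NN_def m1_def m2_def by (simp_all only: plen_pcomp)
  have m1N: "m1 < NN" and m2p: "0 < m2" and m2N: "m2 \<le> NN" using lens a(2) b(2) m2_def by auto
  obtain c1 where c1: "LC (JP w) m 0 m1 c1" using Gamma_piece[OF pw _ _ q1[unfolded sp1]] m1N NN_def m_def by auto
  obtain d1 where d1: "RC (JP w) m 0 m1 d1" using Gamma_piece[OF pw _ _ q1[unfolded sp1]] m1N NN_def m_def by auto
  obtain c2 where c2: "LC (JP w) m m2 NN c2" using Gamma_piece[OF pw m2N _ q2[unfolded sp2]] NN_def m_def by auto
  obtain d2 where d2: "RC (JP w) m m2 NN d2" using Gamma_piece[OF pw m2N _ q2[unfolded sp2]] NN_def m_def by auto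
  have JM: "JMONO (JP w) 0 NN" using JP_JMONO[OF pw] NN_def by simp
  have JL: "\<forall>i j. JP w i j \<longrightarrow> i < j" using JP_lt by fastforce
  have nJa: "\<not> JP w m1 NN" using aB sp1 by (simp add: JP_def)
  have nJb: "\<not> JP w 0 m2" using bB sp2 by (simp add: JP_def)
  obtain e1 c' where e1: "LC (JP w) (Suc m) 0 e1 c'" "\<forall>k\<le>m. c' k = c1 k" "m1 < e1" "e1 \<le> NN"
    using EXT1[OF JM JL c1 c2 ev m2p m1N nJa] by blast
  have e1w: "e1 \<le> plen w" using e1 NN_def by simp
  have Le1: "LC (JP w) (nat (n + 1 + 1)) 0 e1 c'" using e1(1) n2 by simp
  have LD1: "left_decomp (n+1) (piece w 0 e1) (ldec w 0 c' (Suc m))"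
    using T2a[OF pw _ e1w _ Le1] n n2 by simp
  obtain dd where dd: "RC (JP w) (Suc m) 0 e1 dd" using LR[OF JP_JMONO[OF pw e1w] e1(1)] by blast
  have RD1: "right_decomp (n+1) (piece w 0 e1) (rdec w e1 dd (Suc m))"
    using T4a[OF pw _ e1w, where n="n+1" and d=dd] dd n n2 by simp
  have G1: "piece w 0 e1 \<in> Gamma (n+1)"
    unfolding Gamma_def left_amb_def right_amb_def using LD1 RD1 by blast
  have TH1: "(THE us. left_decomp (n+1) (piece w 0 e1) us) = ldec w 0 c' (Suc m)"
    using left_THE[OF pw _ e1w _ Le1] n n2 by simp
  have c'b: "c' 0 = 0" "\<forall>a b. a \<le> b \<longrightarrow> b \<le> m \<longrightarrow> c' a \<le> c' b" "c' m = m1"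
    using e1(2) c1 LC_mono[OF c1] unfolding LC_def by auto
  have sig: "sigma (n+1) n (piece w 0 e1) = q1"
  proof -
    have "sigma (n+1) n (piece w 0 e1) = pcomp_list (ldec w 0 c' m)"
      unfolding sigma_def TH1 using n2 take_ldec by simp
    also have "\<dots> = piece w 0 m1" using ldec_concat[OF c'b(1,2)] c'b(3) m1N NN_def by simp
    finally show ?thesis using sp1 by simp
  qed
  have part1: "\<exists>p1 x1 y1 x c.
            p1 \<in> Gamma (n + 1)
          \<and> occ w p1 x1 y1
          \<and> occ p1 (sigma (n + 1) n p1) x c
          \<and> sigma (n + 1) n p1 = q1
          \<and> pcomp x1 x = triv (ptgt w)
          \<and> pcomp c y1 = a"
  proof (intro exI conjI)
    let ?p1 = "piece w 0 e1"
    have pp1: "is_path ?p1" using is_path_piece[OF pw _ e1w] by simp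
    have pl1: "plen ?p1 = e1" using e1w by simp
    show "?p1 \<in> Gamma (n+1)" by (rule G1)
    show "occ w ?p1 (piece w 0 0) (piece w e1 (plen w))" using occ_pieces[OF pw _ e1w] by simp
    have q1p: "q1 = piece ?p1 0 m1" using sp1 piece_piece[of 0 e1 w 0 m1] e1 e1w by simp
    show "occ ?p1 (sigma (n + 1) n ?p1) (piece ?p1 0 0) (piece ?p1 m1 (plen ?p1))"
      using sig q1p occ_pieces[OF pp1, of 0 m1] pl1 e1 by simp
    show "sigma (n + 1) n ?p1 = q1" by (rule sig)
    have "piece ?p1 0 0 = piece w 0 0" using piece_piece[of 0 e1 w 0 0] e1w by simp
    then show "pcomp (piece w 0 0) (piece ?p1 0 0) = triv (ptgt w)"
      using pcomp_piece[of 0 0 0 w] triv_piece[of w] by simp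
    have "piece ?p1 m1 (plen ?p1) = piece w m1 e1" using piece_piece[of 0 e1 w m1 e1] e1 e1w pl1 by simp
    then show "pcomp (piece ?p1 m1 (plen ?p1)) (piece w e1 (plen w)) = a"
      using pcomp_piece[of m1 e1 "plen w" w] e1 e1w sp1 NN_def by simp
  qed
  obtain s2 d' where s2: "RC (JP w) (Suc m) s2 NN d'" "\<forall>k\<le>m. d' k = d2 k" "s2 < m2"
    using EXT2[OF JM d2 d1 ev m1N nJb] by blast
  have Nw: "NN \<le> plen w" using NN_def by simp
  have s2N: "s2 \<le> NN" using s2(3) m2N by simp
  have Rs2: "RC (JP w) (nat (n + 1 + 1)) s2 NN d'" using s2(1) n2 by simp
  have RD2: "right_decomp (n+1) (piece w s2 NN) (rdec w NN d' (Suc m))"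
    using T4a[OF pw s2N Nw _ Rs2] n n2 by simp
  obtain cc where cc: "LC (JP w) (Suc m) s2 NN cc" using RL[OF JP_JMONO[OF pw Nw] s2(1)] by blast
  have LD2: "left_decomp (n+1) (piece w s2 NN) (ldec w s2 cc (Suc m))"
    using T2a[OF pw s2N Nw, where n="n+1" and c=cc] cc n n2 by simp
  have G2: "piece w s2 NN \<in> Gamma (n+1)"
    unfolding Gamma_def left_amb_def right_amb_def using LD2 RD2 by blast
  have TH2: "(THE vs. right_decomp (n+1) (piece w s2 NN) vs) = rdec w NN d' (Suc m)"
    using right_THE[OF pw s2N Nw _ Rs2] n n2 by simp
  have d'b: "d' 0 = NN" "\<forall>a b. a \<le> b \<longrightarrow> b \<le> m \<longrightarrow> d' b \<le> d' a" "d' m = m2"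
    using s2(2) d2 RC_mono[OF d2] unfolding RC_def by auto
  have piq: "pi (n+1) n (piece w s2 NN) = q2"
  proof -
    have "pi (n+1) n (piece w s2 NN) = pcomp_list (rev (rdec w NN d' m))"
      unfolding pi_def TH2 using n2 take_rdec by simp
    also have "\<dots> = piece w m2 NN" using rdec_concat[OF d'b(1,2) Nw] d'b(3) by simp
    finally show ?thesis using sp2 by simp
  qed
  have part2: "\<exists>p2 x2 y2 x c.
            p2 \<in> Gamma (n + 1)
          \<and> occ w p2 x2 y2
          \<and> occ p2 (pi (n + 1) n p2) x c
          \<and> pi (n + 1) n p2 = q2
          \<and> pcomp x2 x = b
          \<and> pcomp c y2 = triv (psrc w)"
  proof (intro exI conjI)
    let ?p2 = "piece w s2 NN"
    have pp2: "is_path ?p2" using is_path_piece[OF pw s2N Nw] .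
    have pl2: "plen ?p2 = NN - s2" using Nw by simp
    show "?p2 \<in> Gamma (n+1)" by (rule G2)
    show "occ w ?p2 (piece w 0 s2) (piece w NN (plen w))" using occ_pieces[OF pw s2N Nw] by simp
    have q2p: "q2 = piece ?p2 (m2 - s2) (NN - s2)" using sp2 piece_piece[of s2 NN w "m2 - s2" "NN - s2"] s2 s2N Nw m2N by simp
    show "occ ?p2 (pi (n + 1) n ?p2) (piece ?p2 0 (m2 - s2)) (piece ?p2 (NN - s2) (plen ?p2))"
      using piq q2p occ_pieces[OF pp2, of "m2 - s2" "NN - s2"] pl2 m2N by simp
    show "pi (n + 1) n ?p2 = q2" by (rule piq)
    have "piece ?p2 0 (m2 - s2) = piece w s2 m2" using piece_piece[of s2 NN w 0 "m2 - s2"] s2 s2N Nw m2N by simp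
    then show "pcomp (piece w 0 s2) (piece ?p2 0 (m2 - s2)) = b"
      using pcomp_piece[of 0 s2 m2 w] s2 m2N Nw sp2 by simp
    have "piece ?p2 (NN - s2) (plen ?p2) = piece w NN NN" using piece_piece[of s2 NN w "NN - s2" "NN - s2"] s2N Nw pl2 by simp
    then show "pcomp (piece ?p2 (NN - s2) (plen ?p2)) (piece w NN (plen w)) = triv (psrc w)"
      using pcomp_piece[of NN NN NN w] triv_piece2[of w] NN_def by simp
  qed
  show ?thesis using part1 part2 by blast
qed

end
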